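(* Let $n\ge2$ and let $\widetilde{\mathcal T}_n=\mathcal T_n\times\mathbb Z/n\mathbb Z$ with the maps $\sigma_1,\dots,\sigma_{n-1}$ defined in the context. With $\delta_n=\sigma_1\sigma_2\cdots\sigma_{n-1}$ (apply $\sigma_{n-1}$ first), applying $\delta_n$ $n$ times gives $\delta_n^n(T,\varepsilon)=(T,\varepsilon-1)$ for all $(T,\varepsilon)\in\widetilde{\mathcal T}_n$. Consequently the Garside element squared, $\Delta^2=\delta_n^n$ where $\Delta=\delta_n\delta_{n-1}\cdots\delta_2$ and $\delta_m=\sigma_1\cdots\sigma_{m-1}$, acts as the identity on $\mathcal T_n$, and $\Delta^{2n}$ acts as the identity on $\widetilde{\mathcal T}_n$.
   Context: $\mathcal T_n$ is the set of rooted trees with vertices labeled $1,\dots,n$; $v_i$ is the vertex labeled $i$. Maps $\sigma_i$ on $\mathcal T_n$: if $v_{i+1}$ is the root of $T$, $\sigma_iT$ is $T$ with labels $i,i+1$ interchanged. Otherwise form $T_+$ by adding a vertex $v_0$ as parent of the root, write $a\to b$ for "$a$ is the parent of $b$", and: (0) if neither of $v_i,v_{i+1}$ is the parent of the other and they have different parents, interchange labels $i,i+1$; (1) if $v_k\to v_i\to v_{i+1}$, make $v_k\to v_{i+1}\to v_i$, other relations unchanged; (2) if $v_k\to v_{i+1}\to v_i$, make $v_i,v_{i+1}$ both children of $v_k$ and interchange their sets of other children; (3) if $v_i,v_{i+1}$ share parent $v_k$, interchange their sets of children and then make $v_{i+1}$ a child of $v_i$; then delete $v_0$. Reduced weight in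 $T$ with root $v_r$: $\overline w(v_r)=1$; if $v_i$ is a child of the root, $\overline w(v_i)$ is the number of vertices of the subtree rooted at $v_i$ (including $v_i$); otherwise $\overline w(v_i)=0$. On $\widetilde{\mathcal T}_n$ (augmented rooted labeled trees $(T,\varepsilon)$), if $v_r$ is the root of $T$: $\sigma_i(T,\varepsilon)=(\sigma_iT,\varepsilon)$ for $i\ne r-1$, and $\sigma_{r-1}(T,\varepsilon)=(\sigma_{r-1}T,\varepsilon+\overline w(v_{r-1}))$ with $\overline w$ computed in $T$. These maps define actions of the braid group $B_n$ on $\mathcal T_n$ (via the first components) and on $\widetilde{\mathcal T}_n$. *)

theory Defs
  imports Main
begin

text \<open>A rooted tree with vertices labelled 1..n is encoded by its parent function
  par :: nat => nat.  The root v_r has par r = 0, i.e. the auxiliary vertex v_0 of T_+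
  is its parent; labels outside {1..n} are mapped to 0 (canonical encoding).\<close>

definition is_tree :: "nat \<Rightarrow> (nat \<Rightarrow> nat) \<Rightarrow> bool" where
  "is_tree n par \<longleftrightarrow>
     (\<forall>j. j \<notin> {1..n} \<longrightarrow> par j = 0) \<and>
     (\<forall>j\<in>{1..n}. par j \<le> n \<and> par j \<noteq> j) \<and>
     card {j\<in>{1..n}. par j = 0} = 1 \<and>
     (\<forall>j\<in>{1..n}. \<exists>m. (par ^^ m) j = 0)"

definition swp :: "nat \<Rightarrow> nat \<Rightarrow> nat" where
  "swp i x = (if x = i then Suc i else if x = Suc i then i else x)"

definition sigma :: "nat \<Rightarrow> (nat \<Rightarrow> nat) \<Rightarrow> (nat \<Rightarrow> nat)" where
  "sigma i par =
    (if par (Suc i) = 0 then swp i \<circ> par \<circ> swp i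
     else if par (Suc i) = i then par(Suc i := par i, i := Suc i)
     else if par i = Suc i then (\<lambda>j. if j = i \<or> j = Suc i then par (Suc i) else swp i (par j))
     else if par i = par (Suc i) then (\<lambda>j. if j = i then par i else if j = Suc i then i else swp i (par j))
     else swp i \<circ> par \<circ> swp i)"

definition rweight :: "nat \<Rightarrow> (nat \<Rightarrow> nat) \<Rightarrow> nat \<Rightarrow> nat" where
  "rweight n par v =
    (if par v = 0 then 1
     else if par (par v) = 0 then card {j\<in>{1..n}. \<exists>m. (par ^^ m) j = v}
     else 0)"

text \<open>The map sigma_i on augmented trees (T, eps), eps in Z/nZ represented by {0..<n}.
  v_{i+1} is the root iff i = r - 1.\<close>
definition asigma :: "nat \<Rightarrow> nat \<Rightarrow> (nat \<Rightarrow> nat) \<times> int \<Rightarrow> (nat \<Rightarrow> nat) \<times> int" where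
  "asigma n i Te = (case Te of (par, e) \<Rightarrow>
     (sigma i par, if par (Suc i) = 0 then (e + int (rweight n par i)) mod int n else e))"

definition delta :: "nat \<Rightarrow> (nat \<Rightarrow> nat) \<Rightarrow> (nat \<Rightarrow> nat)" where
  "delta m = foldr (\<lambda>i f. sigma i \<circ> f) [1..<m] id"

definition adelta :: "nat \<Rightarrow> nat \<Rightarrow> (nat \<Rightarrow> nat) \<times> int \<Rightarrow> (nat \<Rightarrow> nat) \<times> int" where
  "adelta n m = foldr (\<lambda>i f. asigma n i \<circ> f) [1..<m] id"

definition Garside :: "nat \<Rightarrow> (nat \<Rightarrow> nat) \<Rightarrow> (nat \<Rightarrow> nat)" where
  "Garside n = foldr (\<lambda>m f. delta m \<circ> f) (rev [2..<Suc n]) id"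

definition aGarside :: "nat \<Rightarrow> (nat \<Rightarrow> nat) \<times> int \<Rightarrow> (nat \<Rightarrow> nat) \<times> int" where
  "aGarside n = foldr (\<lambda>m f. adelta n m \<circ> f) (rev [2..<Suc n]) id"

end

theory Submission
  imports Defs
begin

definition sw :: "nat \<Rightarrow> nat \<Rightarrow> nat \<Rightarrow> nat" where
  "sw u v x = (if x = u then v else if x = v then u else x)"
definition gA :: "nat \<Rightarrow> nat \<Rightarrow> nat \<Rightarrow> nat \<Rightarrow> nat" where
  "gA u v a b = (if b = 0 then 0 else if b = u then v else if a = v then b else if a = b then a else sw u v b)"
definition gB :: "nat \<Rightarrow> nat \<Rightarrow> nat \<Rightarrow> nat \<Rightarrow> nat" where
  "gB u v a b = (if b = 0 then sw u v a else if b = u then a else if a = v then b else if a = b then u else sw u v a)"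
definition gt :: "nat \<Rightarrow> nat \<Rightarrow> nat \<Rightarrow> nat \<Rightarrow> nat" where
  "gt u v b x = (if b = u then x else sw u v x)"
definition sigma2 :: "nat \<Rightarrow> nat \<Rightarrow> (nat \<Rightarrow> nat) \<Rightarrow> nat \<Rightarrow> nat" where
  "sigma2 u v f y = (if y = u then gA u v (f u) (f v) else if y = v then gB u v (f u) (f v) else gt u v (f v) (f y))"

lemma swp_sw: "swp i = sw i (Suc i)"
  by (auto simp: swp_def sw_def fun_eq_iff)

lemma sigma_eq: "1 \<le> i \<Longrightarrow> sigma i f = sigma2 i (Suc i) f"
  unfolding sigma_def sigma2_def gA_def gB_def gt_def swp_sw
  by (auto simp: fun_eq_iff sw_def)

lemma inj_on_eqI: "inj_on \<phi> S \<Longrightarrow> x \<in> S \<Longrightarrow> y \<in> S \<Longrightarrow> (\<phi> x = \<phi> y) = (x = y)"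
  by (auto dest: inj_onD)

lemma sw_eqv: assumes "inj_on \<phi> S" "u \<in> S" "v \<in> S" "x \<in> S"
  shows "sw (\<phi> u) (\<phi> v) (\<phi> x) = \<phi> (sw u v x)" "sw u v x \<in> S"
  using assms by (auto simp: sw_def inj_on_eqI)

lemma gA_eqv: assumes "inj_on \<phi> S" "u \<in> S" "v \<in> S" "a \<in> S" "b \<in> S" "0 \<in> S" "\<phi> 0 = 0"
  shows "gA (\<phi> u) (\<phi> v) (\<phi> a) (\<phi> b) = \<phi> (gA u v a b)" "gA u v a b \<in> S"
proof -
  have e: "\<And>x y. x \<in> S \<Longrightarrow> y \<in> S \<Longrightarrow> (\<phi> x = \<phi> y) = (x = y)" by (rule inj_on_eqI[OF assms(1)])
  have c: "(\<phi> b = 0) = (b = 0)" "(\<phi> b = \<phi> u) = (b = u)" "(\<phi> a = \<phi> v) = (a = v)" "(\<phi> a = \<phi> b) = (a = b)"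
    using e[of b 0] e[of b u] e[of a v] e[of a b] assms by auto
  have s: "sw (\<phi> u) (\<phi> v) (\<phi> b) = \<phi> (sw u v b)" using sw_eqv(1) assms by simp
  show "gA (\<phi> u) (\<phi> v) (\<phi> a) (\<phi> b) = \<phi> (gA u v a b)"
    unfolding gA_def c s by (simp add: assms(7))
  show "gA u v a b \<in> S" unfolding gA_def using assms sw_eqv by simp
qed

lemma gB_eqv: assumes "inj_on \<phi> S" "u \<in> S" "v \<in> S" "a \<in> S" "b \<in> S" "0 \<in> S" "\<phi> 0 = 0"
  shows "gB (\<phi> u) (\<phi> v) (\<phi> a) (\<phi> b) = \<phi> (gB u v a b)" "gB u v a b \<in> S"
proof -
  have e: "\<And>x y. x \<in> S \<Longrightarrow> y \<in> S \<Longrightarrow> (\<phi> x = \<phi> y) = (x = y)" by (rule inj_on_eqI[OF assms(1)])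
  have c: "(\<phi> b = 0) = (b = 0)" "(\<phi> b = \<phi> u) = (b = u)" "(\<phi> a = \<phi> v) = (a = v)" "(\<phi> a = \<phi> b) = (a = b)"
    using e[of b 0] e[of b u] e[of a v] e[of a b] assms by auto
  have s: "sw (\<phi> u) (\<phi> v) (\<phi> a) = \<phi> (sw u v a)" using sw_eqv(1) assms by simp
  show "gB (\<phi> u) (\<phi> v) (\<phi> a) (\<phi> b) = \<phi> (gB u v a b)"
    unfolding gB_def c s by simp
  show "gB u v a b \<in> S" unfolding gB_def using assms sw_eqv by simp
qed

lemma gt_eqv: assumes "inj_on \<phi> S" "u \<in> S" "v \<in> S" "b \<in> S" "x \<in> S"
  shows "gt (\<phi> u) (\<phi> v) (\<phi> b) (\<phi> x) = \<phi> (gt u v b x)" "gt u v b x \<in> S"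
proof -
  have c: "(\<phi> b = \<phi> u) = (b = u)" by (rule inj_on_eqI[OF assms(1,4,2)])
  have s: "sw (\<phi> u) (\<phi> v) (\<phi> x) = \<phi> (sw u v x)" using sw_eqv(1) assms by simp
  show "gt (\<phi> u) (\<phi> v) (\<phi> b) (\<phi> x) = \<phi> (gt u v b x)"
    unfolding gt_def c s by simp
  show "gt u v b x \<in> S" unfolding gt_def using assms sw_eqv by simp
qed

definition BR :: "nat \<Rightarrow> nat \<Rightarrow> nat \<Rightarrow> nat \<Rightarrow> nat \<Rightarrow> nat \<Rightarrow> bool" where
 "BR i j k a b c = (let a1 = gA i j a b; b1 = gB i j a b; c1 = gt i j b c;
     a2 = gt j k c1 a1; b2 = gA j k b1 c1; c2 = gB j k b1 c1;
     a3 = gA i j a2 b2; b3 = gB i j a2 b2; c3 = gt i j b2 c2;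
     a1' = gt j k c a; b1' = gA j k b c; c1' = gB j k b c;
     a2' = gA i j a1' b1'; b2' = gB i j a1' b1'; c2' = gt i j b1' c1';
     a3' = gt j k c2' a2'; b3' = gA j k b2' c2'; c3' = gB j k b2' c2'
   in a3 = a3' \<and> b3 = b3' \<and> c3 = c3' \<and> (\<forall>d\<in>{i,j,k}. gt i j b2 (gt j k c1 (gt i j b d)) = gt j k c2' (gt i j b1' (gt j k c d))))"

definition HY :: "nat \<Rightarrow> nat \<Rightarrow> nat \<Rightarrow> nat \<Rightarrow> nat \<Rightarrow> nat \<Rightarrow> bool" where
 "HY i j k a b c = (a \<noteq> i \<and> b \<noteq> j \<and> c \<noteq> k \<and> \<not> (a = j \<and> b = i) \<and> \<not> (b = k \<and> c = j) \<and> \<not> (a = k \<and> c = i)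
    \<and> \<not> (a = j \<and> b = k \<and> c = i) \<and> \<not> (a = k \<and> c = j \<and> b = i))"

lemma seven: "(a::nat) < 7 \<Longrightarrow> a = 0 \<or> a = 1 \<or> a = 2 \<or> a = 3 \<or> a = 4 \<or> a = 5 \<or> a = 6" by auto

lemma BR_concrete: "a < 7 \<Longrightarrow> b < 7 \<Longrightarrow> c < 7 \<Longrightarrow> HY 1 2 3 a b c \<Longrightarrow> BR 1 2 3 a b c"
  apply (drule seven)+
  apply (elim disjE)
  apply (simp_all add: HY_def BR_def gA_def gB_def gt_def sw_def Let_def)
  done

lemma BR_eqv:
  assumes "inj_on \<phi> S" "{0,i,j,k,a,b,c} \<subseteq> S" "\<phi> 0 = 0"
  shows "BR (\<phi> i) (\<phi> j) (\<phi> k) (\<phi> a) (\<phi> b) (\<phi> c) = BR i j k a b c"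
proof -
  have m: "0 \<in> S" "i \<in> S" "j \<in> S" "k \<in> S" "a \<in> S" "b \<in> S" "c \<in> S" using assms(2) by auto
  have e: "\<And>x y. x \<in> S \<Longrightarrow> y \<in> S \<Longrightarrow> (\<phi> x = \<phi> y) = (x = y)" by (rule inj_on_eqI[OF assms(1)])
  note eqs = gA_eqv[OF assms(1) _ _ _ _ m(1) assms(3)] gB_eqv[OF assms(1) _ _ _ _ m(1) assms(3)]
     gt_eqv[OF assms(1)]
  show ?thesis
    unfolding BR_def Let_def
    using m by (simp add: eqs e)
qed

lemma HY_eqv:
  assumes "inj_on \<phi> S" "{0,i,j,k,a,b,c} \<subseteq> S"
  shows "HY (\<phi> i) (\<phi> j) (\<phi> k) (\<phi> a) (\<phi> b) (\<phi> c) = HY i j k a b c"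
proof -
  have e: "\<And>x y. x \<in> S \<Longrightarrow> y \<in> S \<Longrightarrow> (\<phi> x = \<phi> y) = (x = y)" by (rule inj_on_eqI[OF assms(1)])
  show ?thesis unfolding HY_def using assms(2) by (simp add: e)
qed

lemma BR_general:
  assumes d: "i \<noteq> 0" "j \<noteq> 0" "k \<noteq> 0" "i \<noteq> j" "i \<noteq> k" "j \<noteq> k" and h: "HY i j k a b c"
  shows "BR i j k a b c"
proof -
  define \<phi> where "\<phi> x = (if x = 0 then 0 else if x = i then 1 else if x = j then 2 else if x = k then 3
     else if x = a then 4 else if x = b then 5 else if x = c then 6 else (7::nat))" for x
  define S where "S = {0,i,j,k,a,b,c}"
  define \<psi> where "\<psi> y = (if y = 0 then 0 else if y = 1 then i else if y = 2 then j else if y = 3 then k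
     else if y = 4 then a else if y = 5 then b else c)" for y :: nat
  have li: "\<psi> (\<phi> x) = x" if "x \<in> S" for x
  proof -
    have "x = 0 \<or> x = i \<or> x = j \<or> x = k \<or> x = a \<or> x = b \<or> x = c" using that S_def by auto
    then show ?thesis using d by (elim disjE) (simp_all add: \<phi>_def \<psi>_def)
  qed
  have inj: "inj_on \<phi> S" by (rule inj_on_inverseI[of _ \<psi>]) (rule li)
  have lt: "\<phi> a < 7" "\<phi> b < 7" "\<phi> c < 7" unfolding \<phi>_def by auto
  have v: "\<phi> 0 = 0" "\<phi> i = 1" "\<phi> j = 2" "\<phi> k = 3" unfolding \<phi>_def using d by auto
  have "HY (\<phi> i) (\<phi> j) (\<phi> k) (\<phi> a) (\<phi> b) (\<phi> c)" using HY_eqv[OF inj, of i j k a b c] h S_def by simp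
  then have "BR (\<phi> i) (\<phi> j) (\<phi> k) (\<phi> a) (\<phi> b) (\<phi> c)" using BR_concrete[OF lt] v by simp
  then show ?thesis using BR_eqv[OF inj, of i j k a b c] S_def v by simp
qed


lemma swp_simps[simp]: "swp i i = Suc i" "swp i (Suc i) = i"
  "j \<noteq> i \<Longrightarrow> j \<noteq> Suc i \<Longrightarrow> swp i j = j"
  "swp i (swp i j) = j"
  "(swp i a = swp i b) = (a = b)"
  "(swp i a = i) = (a = Suc i)"
  "(swp i a = Suc i) = (a = i)"
  by (auto simp: swp_def)

definition tau :: "nat \<Rightarrow> (nat \<Rightarrow> nat) \<Rightarrow> nat \<Rightarrow> nat" where
  "tau i par v = (if par (Suc i) = i then v else swp i v)"

lemma tau_simps:
  "(tau j p a = tau j p b) = (a = b)"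
  "v \<noteq> j \<Longrightarrow> v \<noteq> Suc j \<Longrightarrow> tau j p v = v"
  "c \<noteq> j \<Longrightarrow> c \<noteq> Suc j \<Longrightarrow> (tau j p v = c) = (v = c)"
  by (auto simp: tau_def swp_def)

lemma tau_swp: "Suc i < j \<Longrightarrow> tau j p (swp i v) = swp i (tau j p v)"
  "Suc j < i \<Longrightarrow> tau j p (swp i v) = swp i (tau j p v)"
  by (auto simp: tau_def swp_def)

lemma swp_eq_other: "c \<noteq> i \<Longrightarrow> c \<noteq> Suc i \<Longrightarrow> (swp i a = c) = (a = c)"
  by (auto simp: swp_def)

lemma sigma_out:
  "1 \<le> i \<Longrightarrow> x \<noteq> i \<Longrightarrow> x \<noteq> Suc i \<Longrightarrow> sigma i par x = tau i par (par x)"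
  unfolding sigma_def tau_def by auto

lemma sigma_at_i:
  "1 \<le> i \<Longrightarrow> sigma i par i = (if par (Suc i) = 0 then 0 else if par (Suc i) = i then Suc i
     else if par i = Suc i then par (Suc i) else if par i = par (Suc i) then par i else swp i (par (Suc i)))"
  unfolding sigma_def by (auto simp: swp_def)

lemma sigma_at_Si:
  "1 \<le> i \<Longrightarrow> sigma i par (Suc i) = (if par (Suc i) = 0 then swp i (par i) else if par (Suc i) = i then par i
     else if par i = Suc i then par (Suc i) else if par i = par (Suc i) then i else swp i (par i))"
  unfolding sigma_def by (auto simp: swp_def)

lemma tau_comm: "Suc i < j \<Longrightarrow> tau i p (tau j q v) = tau j q (tau i p v)"
  by (auto simp: tau_def swp_def)

lemma sigma_comm_pt:
  assumes "Suc i < j" "1 \<le> i"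
  shows "sigma i (sigma j par) x = sigma j (sigma i par) x"
proof -
  have j1: "1 \<le> j" using assms by auto
  have ta: "tau i (sigma j par) = tau i par" 
    using assms by (auto simp: tau_def fun_eq_iff sigma_out j1 swp_def)
  have tb: "tau j (sigma i par) = tau j par" 
    using assms by (auto simp: tau_def fun_eq_iff sigma_out swp_def)
  have ne: "i \<noteq> j" "i \<noteq> Suc j" "Suc i \<noteq> j" "Suc i \<noteq> Suc j" "0 \<noteq> j" "0 \<noteq> Suc j"
    "j \<noteq> i" "j \<noteq> Suc i" "Suc j \<noteq> i" "Suc j \<noteq> Suc i"
    using assms by auto
  consider "x = i" | "x = Suc i" | "x = j" | "x = Suc j" | "x \<notin> {i, Suc i, j, Suc j}" by blast
  then show ?thesis
  proof cases
    case 1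
    then show ?thesis using assms j1
      by (simp add: sigma_out sigma_at_i tb ne tau_simps tau_swp)
  next
    case 2
    then show ?thesis using assms j1
      by (simp add: sigma_out sigma_at_Si tb ne tau_simps tau_swp)
  next
    case 3
    then show ?thesis using assms j1
      by (simp add: sigma_out sigma_at_i ta ne tau_simps tau_swp swp_eq_other) 
  next
    case 4
    then show ?thesis using assms j1
      by (simp add: sigma_out sigma_at_Si ta ne tau_simps tau_swp swp_eq_other)
  next
    case 5
    then show ?thesis using assms j1
      by (simp add: sigma_out ta tb tau_comm[OF assms(1)])
  qed
qed

lemma sigma_comm: "Suc i < j \<Longrightarrow> 1 \<le> i \<Longrightarrow> sigma i (sigma j par) = sigma j (sigma i par)"
  using sigma_comm_pt by blast

definition good :: "nat \<Rightarrow> (nat \<Rightarrow> nat) \<Rightarrow> bool" where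
  "good n par \<longleftrightarrow> (\<forall>j. (j = 0 \<or> n < j) \<longrightarrow> par j = 0) \<and> (\<forall>j. par j \<le> n) \<and>
     (\<exists>h::nat\<Rightarrow>nat. \<forall>j. par j \<noteq> 0 \<longrightarrow> h (par j) < h j)"

lemma good_rank: "good n par \<Longrightarrow> \<exists>h::nat\<Rightarrow>nat. \<forall>j. par j \<noteq> 0 \<longrightarrow> h (par j) < h j"
  unfolding good_def by blast

lemma good_noloop: assumes "good n par" "j \<noteq> 0" shows "par j \<noteq> j"
proof
  assume a: "par j = j"
  obtain h :: "nat \<Rightarrow> nat" where h: "\<forall>j. par j \<noteq> 0 \<longrightarrow> h (par j) < h j" using good_rank[OF assms(1)] by blast
  show False using h[rule_format, of j] a assms(2) by simp
qed

lemma good_no2: assumes "good n par" "a \<noteq> 0" "b \<noteq> 0" "par a = b" "par b = a" shows False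
proof -
  obtain h :: "nat \<Rightarrow> nat" where h: "\<forall>j. par j \<noteq> 0 \<longrightarrow> h (par j) < h j" using good_rank[OF assms(1)] by blast
  show False using h[rule_format, of a] h[rule_format, of b] assms by simp
qed

lemma good_no3: assumes "good n par" "a \<noteq> 0" "b \<noteq> 0" "c \<noteq> 0" "par a = b" "par b = c" "par c = a" shows False
proof -
  obtain h :: "nat \<Rightarrow> nat" where h: "\<forall>j. par j \<noteq> 0 \<longrightarrow> h (par j) < h j" using good_rank[OF assms(1)] by blast
  show False using h[rule_format, of a] h[rule_format, of b] h[rule_format, of c] assms by simp
qed

lemma good_HY: assumes "good n par" "1 \<le> i"
  shows "HY i (Suc i) (Suc (Suc i)) (par i) (par (Suc i)) (par (Suc (Suc i)))"
proof -
  have nz: "i \<noteq> 0" using assms(2) by simp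
  note l = good_noloop[OF assms(1), of i] good_noloop[OF assms(1), of "Suc i"] good_noloop[OF assms(1), of "Suc (Suc i)"]
  note t = good_no2[OF assms(1), of i "Suc i"] good_no2[OF assms(1), of "Suc i" "Suc (Suc i)"] good_no2[OF assms(1), of i "Suc (Suc i)"]
  note r = good_no3[OF assms(1), of i "Suc i" "Suc (Suc i)"] good_no3[OF assms(1), of i "Suc (Suc i)" "Suc i"]
  show ?thesis unfolding HY_def using nz l t r by blast
qed

lemma braid:
  assumes "good n par" "1 \<le> i"
  shows "sigma i (sigma (Suc i) (sigma i par)) = sigma (Suc i) (sigma i (sigma (Suc i) par))"
proof -
  have i1: "1 \<le> Suc i" using assms by simp
  have BRi: "BR i (Suc i) (Suc (Suc i)) (par i) (par (Suc i)) (par (Suc (Suc i)))"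
    by (rule BR_general) (use assms good_HY in auto)
  show ?thesis
  proof (rule ext)
    fix y
    consider "y = i" | "y = Suc i" | "y = Suc (Suc i)" | "y \<notin> {i, Suc i, Suc (Suc i)}" by blast
    then show "sigma i (sigma (Suc i) (sigma i par)) y = sigma (Suc i) (sigma i (sigma (Suc i) par)) y"
    proof cases
      case 1 then show ?thesis using BRi assms(2) i1 by (simp add: sigma_eq sigma2_def BR_def Let_def)
    next
      case 2 then show ?thesis using BRi assms(2) i1 by (simp add: sigma_eq sigma2_def BR_def Let_def)
    next
      case 3 then show ?thesis using BRi assms(2) i1 by (simp add: sigma_eq sigma2_def BR_def Let_def)
    next
      case 4
      show ?thesis
      proof (cases "par y \<in> {i, Suc i, Suc (Suc i)}")
        case True
        have F: "\<forall>d\<in>{i, Suc i, Suc (Suc i)}. gt i (Suc i) (gA (Suc i) (Suc (Suc i)) (gB i (Suc i) (par i) (par (Suc i))) (gt i (Suc i) (par (Suc i)) (par (Suc (Suc i)))))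
           (gt (Suc i) (Suc (Suc i)) (gt i (Suc i) (par (Suc i)) (par (Suc (Suc i)))) (gt i (Suc i) (par (Suc i)) d)) =
          gt (Suc i) (Suc (Suc i)) (gt i (Suc i) (gA (Suc i) (Suc (Suc i)) (par (Suc i)) (par (Suc (Suc i)))) (gB (Suc i) (Suc (Suc i)) (par (Suc i)) (par (Suc (Suc i)))))
           (gt i (Suc i) (gA (Suc i) (Suc (Suc i)) (par (Suc i)) (par (Suc (Suc i)))) (gt (Suc i) (Suc (Suc i)) (par (Suc (Suc i))) d))"
          using BRi unfolding BR_def Let_def by blast
        show ?thesis using 4 F[rule_format, OF True] assms(2) i1 by (simp add: sigma_eq sigma2_def)
      next
        case False
        then show ?thesis using 4 assms(2) i1 by (simp add: sigma_eq sigma2_def gt_def sw_def)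
      qed
    qed
  qed
qed


lemma gA_mem: "gA u v a b \<in> {0, u, v, a, b}" unfolding gA_def sw_def by auto
lemma gB_mem: "gB u v a b \<in> {u, v, a, b}" unfolding gB_def sw_def by auto
lemma gt_mem: "gt u v b x \<in> {u, v, x}" unfolding gt_def sw_def by auto

lemma swp_zero: "1 \<le> i \<Longrightarrow> (swp i x = 0) = (x = 0)" by (auto simp: swp_def)

lemma rank_conj:
  assumes h: "\<forall>j. par j \<noteq> 0 \<longrightarrow> h (par j) < (h::nat\<Rightarrow>nat) j" and i1: "1 \<le> i"
  shows "\<forall>j. (swp i \<circ> par \<circ> swp i) j \<noteq> 0 \<longrightarrow> (h \<circ> swp i) ((swp i \<circ> par \<circ> swp i) j) < (h \<circ> swp i) j"
proof (intro allI impI)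
  fix j assume "(swp i \<circ> par \<circ> swp i) j \<noteq> 0"
  then have "par (swp i j) \<noteq> 0" using i1 by (simp add: swp_zero)
  then show "(h \<circ> swp i) ((swp i \<circ> par \<circ> swp i) j) < (h \<circ> swp i) j" using h by simp
qed

lemma good_sigma:
  assumes g: "good n par" and i1: "1 \<le> i" and i2: "i < n"
  shows "good n (sigma i par)"
proof -
  obtain h :: "nat \<Rightarrow> nat" where h: "\<forall>j. par j \<noteq> 0 \<longrightarrow> h (par j) < h j" using good_rank[OF g] by blast
  have r1: "\<forall>j. (j = 0 \<or> n < j) \<longrightarrow> par j = 0" and r2: "\<forall>j. par j \<le> n" using g unfolding good_def by auto
  let ?q = "sigma i par"
  have q1: "\<forall>j. (j = 0 \<or> n < j) \<longrightarrow> ?q j = 0"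
  proof (intro allI impI)
    fix j assume "j = 0 \<or> n < j"
    then have "j \<noteq> i" "j \<noteq> Suc i" "par j = 0" using i1 i2 r1 by auto
    then show "?q j = 0" using i1 by (simp add: sigma_out tau_def)
  qed
  have q2: "\<forall>j. ?q j \<le> n"
  proof
    fix j
    have m: "?q j \<in> {0, i, Suc i, par i, par (Suc i), par j}"
      using gA_mem[of i "Suc i" "par i" "par (Suc i)"] gB_mem[of i "Suc i" "par i" "par (Suc i)"]
        gt_mem[of i "Suc i" "par (Suc i)" "par j"] i1
      by (auto simp: sigma_eq sigma2_def)
    then show "?q j \<le> n" using r2 i1 i2 by auto
  qed
  have q3: "\<exists>h'::nat\<Rightarrow>nat. \<forall>j. ?q j \<noteq> 0 \<longrightarrow> h' (?q j) < h' j"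
  proof -
    have nl: "\<And>j. j \<noteq> 0 \<Longrightarrow> par j \<noteq> j" using good_noloop[OF g] by blast
    have hh: "\<And>j. par j \<noteq> 0 \<Longrightarrow> h (par j) < h j" using h by blast
    consider (c0) "par (Suc i) = 0 \<or> (par (Suc i) \<noteq> i \<and> par i \<noteq> Suc i \<and> par i \<noteq> par (Suc i))"
      | (c1) "par (Suc i) \<noteq> 0" "par (Suc i) = i"
      | (c2) "par (Suc i) \<noteq> 0" "par (Suc i) \<noteq> i" "par i = Suc i"
      | (c3) "par (Suc i) \<noteq> 0" "par (Suc i) \<noteq> i" "par i \<noteq> Suc i" "par i = par (Suc i)"
      by blast
    then show ?thesis
    proof cases
      case c0
      then have "?q = swp i \<circ> par \<circ> swp i" unfolding sigma_def by auto
      then show ?thesis using rank_conj[OF h i1] by metis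
    next
      case c1
      have e: "?q = par(Suc i := par i, i := Suc i)" using c1 unfolding sigma_def by auto
      have hi: "h i < h (Suc i)" using hh[of "Suc i"] c1 by simp
      have a1: "par i \<noteq> Suc i" using good_no2[OF g, of i "Suc i"] c1 i1 by auto
      have a2: "par i \<noteq> i" using nl i1 by auto
      define h' where "h' j = (if j = Suc i then 2 * h i else if j = i then 2 * h i + 1 else 2 * h j)" for j
      have "\<forall>j. ?q j \<noteq> 0 \<longrightarrow> h' (?q j) < h' j"
      proof (intro allI impI)
        fix j assume qj: "?q j \<noteq> 0"
        consider "j = i" | "j = Suc i" | "j \<noteq> i" "j \<noteq> Suc i" by blast
        then show "h' (?q j) < h' j"
        proof cases
          case 1 then show ?thesis by (simp add: e h'_def)
        next
          case 2 then show ?thesis using qj hh[of i] a1 a2 by (simp add: e h'_def)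
        next
          case 3
          then have pj: "par j \<noteq> 0" "?q j = par j" using qj by (auto simp: e)
          show ?thesis using 3 pj hh[of j] hi by (auto simp: h'_def)
        qed
      qed
      then show ?thesis by blast
    next
      case c2
      have e: "?q = (\<lambda>j. if j = i \<or> j = Suc i then par (Suc i) else swp i (par j))" using c2 unfolding sigma_def by auto
      have hi: "h (Suc i) < h i" using hh[of i] c2 by simp
      have hb: "h (par (Suc i)) < h (Suc i)" using hh[of "Suc i"] c2 by simp
      have b1: "par (Suc i) \<noteq> Suc i" using nl by auto
      define h' where "h' j = (if j = i then h (Suc i) else h j)" for j
      have "\<forall>j. ?q j \<noteq> 0 \<longrightarrow> h' (?q j) < h' j"
      proof (intro allI impI)
        fix j assume qj: "?q j \<noteq> 0"
        consider "j = i" | "j = Suc i" | "j \<noteq> i" "j \<noteq> Suc i" by blast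
        then show "h' (?q j) < h' j"
        proof cases
          case 1 then show ?thesis using c2 hb by (simp add: e h'_def)
        next
          case 2 then show ?thesis using c2 hb by (simp add: e h'_def)
        next
          case 3
          then have pj: "par j \<noteq> 0" using qj i1 3 by (simp add: e swp_zero)
          have hj: "h (par j) < h j" using hh[OF pj] .
          consider "par j = i" | "par j = Suc i" | "par j \<noteq> i" "par j \<noteq> Suc i" by blast
          then show ?thesis
          proof cases
            case 1 then show ?thesis using 3 hj hi by (simp add: e h'_def)
          next
            case 2 then show ?thesis using 3 hj by (simp add: e h'_def)
          next
            case 4: 3 then show ?thesis using 3 hj by (simp add: e h'_def)
          qed
        qed
      qed
      then show ?thesis by blast
    next
      case c3
      have e: "?q = (\<lambda>j. if j = i then par i else if j = Suc i then i else swp i (par j))" using c3 unfolding sigma_def by auto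
      let ?a = "par i"
      have ha: "h ?a < h i" "h ?a < h (Suc i)" using hh[of i] hh[of "Suc i"] c3 by auto
      have a1: "?a \<noteq> i" using nl i1 by auto
      define h' where "h' j = (if j = i then 3 * h ?a + 1 else if j = Suc i then 3 * h ?a + 2 else 3 * h j)" for j
      have "\<forall>j. ?q j \<noteq> 0 \<longrightarrow> h' (?q j) < h' j"
      proof (intro allI impI)
        fix j assume qj: "?q j \<noteq> 0"
        consider "j = i" | "j = Suc i" | "j \<noteq> i" "j \<noteq> Suc i" by blast
        then show "h' (?q j) < h' j"
        proof cases
          case 1 then show ?thesis using c3 a1 by (simp add: e h'_def)
        next
          case 2 then show ?thesis using c3 by (simp add: e h'_def)
        next
          case 3
          then have pj: "par j \<noteq> 0" using qj i1 3 by (simp add: e swp_zero)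
          have hj: "h (par j) < h j" using hh[OF pj] .
          consider "par j = i" | "par j = Suc i" | "par j \<noteq> i" "par j \<noteq> Suc i" by blast
          then show ?thesis
          proof cases
            case 1 then show ?thesis using 3 hj ha by (simp add: e h'_def)
          next
            case 2 then show ?thesis using 3 hj ha by (simp add: e h'_def)
          next
            case 4: 3 then show ?thesis using 3 hj by (simp add: e h'_def)
          qed
        qed
      qed
      then show ?thesis by blast
    qed
  qed
  show ?thesis unfolding good_def using q1 q2 q3 by blast
qed


definition pk :: "nat \<Rightarrow> nat \<Rightarrow> nat \<Rightarrow> nat" where
  "pk n k j = (if j = n then k else if k \<le> j \<and> j < n then Suc j else j)"
definition ipk :: "nat \<Rightarrow> nat \<Rightarrow> nat \<Rightarrow> nat" where
  "ipk n k j = (if j = k then n else if k < j \<and> j \<le> n then j - 1 else j)"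
definition inA :: "nat \<Rightarrow> nat \<Rightarrow> nat \<Rightarrow> nat \<Rightarrow> bool" where
  "inA n k p y = ((if k \<le> p then y < k else k \<le> y) \<and> 1 \<le> y \<and> y < n)"
definition Mk :: "nat \<Rightarrow> nat \<Rightarrow> (nat \<Rightarrow> nat) \<Rightarrow> nat \<Rightarrow> nat" where
  "Mk n k par y = (if par n \<noteq> 0 \<and> inA n k (par n) y then
      (if par y = par n then n else if par y = n then par n else par y) else par y)"
definition Q :: "nat \<Rightarrow> nat \<Rightarrow> (nat \<Rightarrow> nat) \<Rightarrow> nat \<Rightarrow> nat" where
  "Q n k par = pk n k \<circ> Mk n k par \<circ> ipk n k"
definition rot :: "nat \<Rightarrow> (nat \<Rightarrow> nat) \<Rightarrow> nat \<Rightarrow> nat" where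
  "rot n par = pk n 1 \<circ> par \<circ> ipk n 1"

lemma ipk_pk: "1 \<le> k \<Longrightarrow> k \<le> n \<Longrightarrow> ipk n k (pk n k j) = j"
  unfolding pk_def ipk_def by auto
lemma pk_ipk: "1 \<le> k \<Longrightarrow> k \<le> n \<Longrightarrow> pk n k (ipk n k j) = j"
  unfolding pk_def ipk_def by auto
lemma pk_0: "1 \<le> k \<Longrightarrow> k \<le> n \<Longrightarrow> pk n k 0 = 0"
  unfolding pk_def by auto

lemma sigma2_conj:
  assumes l: "\<And>x. \<rho> (\<pi> x) = x" and r: "\<And>x. \<pi> (\<rho> x) = x" and z: "\<pi> 0 = 0"
  shows "sigma2 (\<pi> u) (\<pi> v) (\<pi> \<circ> f \<circ> \<rho>) = \<pi> \<circ> sigma2 u v f \<circ> \<rho>"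
proof (rule ext)
  fix y
  have inj: "inj_on \<pi> UNIV" by (metis l injI)
  have e: "(\<pi> a = \<pi> b) = (a = b)" for a b using inj by (auto dest: inj_onD)
  obtain z where y: "y = \<pi> z" using r by metis
  have rz: "\<rho> y = z" using y l by simp
  note eqv = gA_eqv(1)[OF inj, simplified, OF z] gB_eqv(1)[OF inj, simplified, OF z] gt_eqv(1)[OF inj, simplified]
  show "sigma2 (\<pi> u) (\<pi> v) (\<pi> \<circ> f \<circ> \<rho>) y = (\<pi> \<circ> sigma2 u v f \<circ> \<rho>) y"
    unfolding sigma2_def y using l e eqv by simp
qed

definition mo :: "nat \<Rightarrow> nat \<Rightarrow> nat \<Rightarrow> nat" where
  "mo p n v = (if v = p then n else if v = n then p else v)"

lemma Mk_n: "Mk n k par n = par n" unfolding Mk_def inA_def by simp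
lemma Mk_gen: "Mk n k par y = (if par n \<noteq> 0 \<and> inA n k (par n) y then mo (par n) n (par y) else par y)"
  unfolding Mk_def mo_def by simp

lemma local_step:
  assumes g: "good n par" and u1: "1 \<le> u" and un: "Suc u \<le> n"
  shows "sigma2 u n (Mk n (Suc u) par) y = sw u n (Mk n u par (sw u n y))"
proof -
  have r1: "\<forall>j. (j = 0 \<or> n < j) \<longrightarrow> par j = 0" and r2: "\<forall>j. par j \<le> n" using g unfolding good_def by auto
  define p where "p = par n"
  define a where "a = par u"
  have pn: "p \<noteq> n" using good_noloop[OF g, of n] un p_def by simp
  have au: "a \<noteq> u" using good_noloop[OF g, of u] u1 a_def by simp
  have c2: "\<not> (a = n \<and> p = u)" using good_no2[OF g, of u n] u1 un a_def p_def by auto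
  have pl: "p < n" using r2 pn p_def le_neq_implies_less by blast
  have nu: "n \<noteq> u" "u \<noteq> n" "n \<noteq> 0" "u \<noteq> 0" using u1 un by auto
  have M1u: "Mk n (Suc u) par u = (if p \<noteq> 0 \<and> Suc u \<le> p then mo p n a else a)"
    unfolding Mk_gen inA_def p_def a_def using u1 un by auto
  have M0u: "Mk n u par u = (if p \<noteq> 0 \<and> p < u then mo p n a else a)"
    unfolding Mk_gen inA_def p_def a_def using u1 un by auto
  have swn: "sw u n n = u" "sw u n u = n" by (auto simp: sw_def)
  consider "y = u" | "y = n" | "y \<noteq> u" "y \<noteq> n" by blast
  then show ?thesis
  proof cases
    case 1
    then show ?thesis unfolding 1 sigma2_def swn Mk_n p_def[symmetric] M1u
      using pn au c2 pl nu by (auto simp: gA_def mo_def sw_def)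
  next
    case 2
    then show ?thesis unfolding 2 sigma2_def swn Mk_n p_def[symmetric] M1u M0u
      using pn au c2 pl nu by (auto simp: gB_def mo_def sw_def)
  next
    case 3
    have sy: "sw u n y = y" using 3 by (simp add: sw_def)
    define v where "v = par y"
    have lhs: "sigma2 u n (Mk n (Suc u) par) y = gt u n p (Mk n (Suc u) par y)"
      unfolding sigma2_def using 3 Mk_n p_def by simp
    show ?thesis
    proof (cases "1 \<le> y \<and> y < n")
      case False
      then have "y = 0 \<or> n < y" using 3 by auto
      then have "v = 0" using r1[rule_format, of y] v_def by simp
      moreover have "\<not> inA n k p y" for k using False unfolding inA_def by auto
      ultimately show ?thesis unfolding lhs sy Mk_gen p_def[symmetric] v_def[symmetric]
        using nu by (auto simp: gt_def sw_def)
    next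
      case True
      have iA: "inA n (Suc u) p y = (if Suc u \<le> p then y < u else Suc u \<le> y)"
               "inA n u p y = (if u \<le> p then y < u else Suc u \<le> y)"
        unfolding inA_def using True 3 by auto
      show ?thesis unfolding lhs sy Mk_gen p_def[symmetric] v_def[symmetric] iA
        using nu pn pl 3 by (auto simp: gt_def sw_def mo_def)
    qed
  qed
qed


lemma good_foldr: "good n par \<Longrightarrow> set w \<subseteq> {1..<n} \<Longrightarrow> good n (foldr sigma w par)"
  by (induction w) (auto intro: good_sigma)

lemma comm_word:
  assumes "\<forall>a\<in>set w. 1 \<le> a \<and> (Suc a < i \<or> Suc i < a)" "1 \<le> i"
  shows "foldr sigma w (sigma i par) = sigma i (foldr sigma w par)"
  using assms
proof (induction w)
  case Nil then show ?case by simp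
next
  case (Cons a w)
  then have IH: "foldr sigma w (sigma i par) = sigma i (foldr sigma w par)" by simp
  have "sigma a (sigma i (foldr sigma w par)) = sigma i (sigma a (foldr sigma w par))"
  proof -
    from Cons.prems have "1 \<le> a" "Suc a < i \<or> Suc i < a" by auto
    then show ?thesis using sigma_comm[of a i] sigma_comm[of i a] Cons.prems(2) by auto
  qed
  then show ?case using IH by simp
qed

lemma upt_split3: "1 \<le> i \<Longrightarrow> i + 2 \<le> m \<Longrightarrow> [1..<m] = [1..<i] @ [i, Suc i] @ [i+2..<m]"
proof -
  assume a: "1 \<le> i" "i + 2 \<le> m"
  have "[1..<m] = [1..<i] @ [i..<m]" using a upt_add_eq_append[of 1 i "m - i"] by simp
  moreover have "[i..<m] = i # Suc i # [i+2..<m]" using a by (simp add: upt_conv_Cons)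
  ultimately show ?thesis by simp
qed

lemma E2:
  assumes g: "good n par" and i1: "1 \<le> i" and im: "i + 2 \<le> m" and mn: "m \<le> n"
  shows "foldr sigma [1..<m] (sigma i par) = sigma (Suc i) (foldr sigma [1..<m] par)"
proof -
  let ?Y = "foldr sigma [i+2..<m] par"
  have gY: "good n ?Y" by (rule good_foldr[OF g]) (use mn in auto)
  have s1: "foldr sigma [i+2..<m] (sigma i par) = sigma i ?Y"
    by (rule comm_word) (use i1 in auto)
  have s2: "sigma i (sigma (Suc i) (sigma i ?Y)) = sigma (Suc i) (sigma i (sigma (Suc i) ?Y))"
    by (rule braid[OF gY i1])
  have s3: "foldr sigma [1..<i] (sigma (Suc i) Z) = sigma (Suc i) (foldr sigma [1..<i] Z)" for Z
    by (rule comm_word) (use i1 in auto)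
  have "foldr sigma [1..<m] (sigma i par) = foldr sigma [1..<i] (sigma i (sigma (Suc i) (foldr sigma [i+2..<m] (sigma i par))))"
    unfolding upt_split3[OF i1 im] foldr_append by simp
  also have "\<dots> = foldr sigma [1..<i] (sigma (Suc i) (sigma i (sigma (Suc i) ?Y)))"
    by (simp only: s1 s2)
  also have "\<dots> = sigma (Suc i) (foldr sigma [1..<i] (sigma i (sigma (Suc i) ?Y)))"
    by (rule s3)
  also have "foldr sigma [1..<i] (sigma i (sigma (Suc i) ?Y)) = foldr sigma [1..<m] par"
    unfolding upt_split3[OF i1 im] foldr_append by simp
  finally show ?thesis .
qed

lemma E3:
  assumes g: "good n par" and w: "\<forall>a\<in>set w. 1 \<le> a \<and> a + 2 \<le> m" and mn: "m \<le> n"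
  shows "foldr sigma [1..<m] (foldr sigma w par) = foldr sigma (map Suc w) (foldr sigma [1..<m] par)"
  using w
proof (induction w)
  case Nil then show ?case by simp
next
  case (Cons a w)
  have gw: "good n (foldr sigma w par)" by (rule good_foldr[OF g]) (use Cons.prems mn in auto)
  have "foldr sigma [1..<m] (sigma a (foldr sigma w par)) = sigma (Suc a) (foldr sigma [1..<m] (foldr sigma w par))"
    by (rule E2[OF gw]) (use Cons.prems mn in auto)
  then show ?case using Cons by simp
qed

lemma D_cons: "2 \<le> m \<Longrightarrow> [1..<m] = 1 # map Suc [1..<m-1]"
  by (simp add: upt_conv_Cons map_Suc_upt)

lemma E4:
  assumes g: "good n par" and m2: "2 \<le> m" and mn: "m \<le> n"
  shows "foldr sigma [1..<m] (foldr sigma [1..<m] par) = sigma 1 (foldr sigma [1..<m] (foldr sigma [1..<m-1] par))"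
proof -
  have "foldr sigma [1..<m] (foldr sigma [1..<m] par) = sigma 1 (foldr sigma (map Suc [1..<m-1]) (foldr sigma [1..<m] par))"
    by (subst D_cons[OF m2]) simp
  also have "foldr sigma (map Suc [1..<m-1]) (foldr sigma [1..<m] par) = foldr sigma [1..<m] (foldr sigma [1..<m-1] par)"
    by (rule E3[OF g _ mn, symmetric]) (use m2 in auto)
  finally show ?thesis .
qed

definition dl :: "nat \<Rightarrow> (nat \<Rightarrow> nat) \<Rightarrow> (nat \<Rightarrow> nat)" where
  "dl m par = foldr sigma [1..<m] par"

lemma good_dl: "good n par \<Longrightarrow> m \<le> n \<Longrightarrow> good n (dl m par)"
  unfolding dl_def by (rule good_foldr) auto

lemma good_dl_pow: "good n par \<Longrightarrow> m \<le> n \<Longrightarrow> good n ((dl m ^^ k) par)"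
  by (induction k) (auto intro: good_dl)

lemma rev_upt_Suc: assumes "1 \<le> k" shows "rev [1..<Suc k] = map Suc (rev [1..<k]) @ [1]"
proof (cases k)
  case 0 then show ?thesis using assms by simp
next
  case (Suc k')
  have "[1..<Suc k] = 1 # map Suc [1..<k]" by (simp add: upt_conv_Cons map_Suc_upt Suc del: upt_Suc)
  then show ?thesis by (simp add: rev_map)
qed

lemma E5:
  assumes g: "good n par" and m2: "2 \<le> m" and mn: "m \<le> n" and k1: "1 \<le> k" and km: "k \<le> m"
  shows "(dl m ^^ k) par = foldr sigma (rev [1..<k]) (dl m ((dl (m-1) ^^ (k-1)) par))"
  using k1 km
proof (induction k rule: dec_induct)
  case base then show ?case by simp
next
  case (step k)
  let ?Y = "(dl (m-1) ^^ (k-1)) par"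
  have gY: "good n ?Y" by (rule good_dl_pow[OF g]) (use mn in auto)
  have gdY: "good n (dl m ?Y)" by (rule good_dl[OF gY mn])
  have IH: "(dl m ^^ k) par = foldr sigma (rev [1..<k]) (dl m ?Y)" using step by simp
  have "(dl m ^^ Suc k) par = dl m (foldr sigma (rev [1..<k]) (dl m ?Y))" using IH by simp
  also have "\<dots> = foldr sigma (map Suc (rev [1..<k])) (dl m (dl m ?Y))"
    using E3[OF gdY, of "rev [1..<k]" m] mn step.prems step.hyps by (simp add: dl_def)
  also have "dl m (dl m ?Y) = sigma 1 (dl m (dl (m-1) ?Y))"
    using E4[OF gY m2 mn] by (simp add: dl_def)
  also have "dl (m-1) ?Y = (dl (m-1) ^^ (Suc k - 1)) par"
    using step.hyps(1) by (cases k) auto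
  finally show ?case using rev_upt_Suc[OF step.hyps(1)] by (simp del: upt_Suc)
qed

definition Dl :: "nat \<Rightarrow> nat list" where
  "Dl m = concat (map (\<lambda>k. [1..<k]) (rev [2..<Suc m]))"

lemma Dl_Suc: "Dl (Suc m) = [1..<Suc m] @ Dl m"
  by (cases m) (auto simp: Dl_def)

lemma Dl_0: "Dl 0 = []" and Dl_1: "Dl (Suc 0) = []" by (auto simp: Dl_def)

lemma set_Dl: "set (Dl m) \<subseteq> {1..<m}"
  by (induction m) (auto simp: Dl_Suc Dl_0)

lemma good_Dl: "good n par \<Longrightarrow> m \<le> n \<Longrightarrow> good n (foldr sigma (Dl m) par)"
  by (rule good_foldr) (use set_Dl in fastforce)+

lemma E6:
  assumes g: "good n par" and i1: "1 \<le> i" and im: "i < m" and mn: "m \<le> n"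
  shows "foldr sigma (Dl m) (sigma i par) = sigma (m - i) (foldr sigma (Dl m) par)"
  using im mn g
proof (induction m arbitrary: par)
  case 0 then show ?case by simp
next
  case (Suc m)
  show ?case
  proof (cases "i < m")
    case True
    have IH: "foldr sigma (Dl m) (sigma i par) = sigma (m - i) (foldr sigma (Dl m) par)"
      using Suc True by simp
    have gD: "good n (foldr sigma (Dl m) par)" using good_Dl Suc by simp
    have "foldr sigma [1..<Suc m] (sigma (m - i) (foldr sigma (Dl m) par)) = sigma (Suc (m - i)) (foldr sigma [1..<Suc m] (foldr sigma (Dl m) par))"
      by (rule E2[OF gD]) (use True i1 Suc.prems in auto)
    then show ?thesis using IH True by (simp add: Dl_Suc Suc_diff_le)
  next
    case False
    then have im: "i = m" using Suc.prems by simp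
    then have m1: "1 \<le> m" using i1 by simp
    have DS: "Dl (Suc m) = [1..<Suc m] @ [1..<m] @ Dl (m - 1)"
      using m1 Dl_Suc[of m] Dl_Suc[of "m-1"] by simp
    have c: "foldr sigma (Dl (m-1)) (sigma m par) = sigma m (foldr sigma (Dl (m-1)) par)"
      by (rule comm_word) (use set_Dl[of "m-1"] m1 in fastforce)+
    have d: "foldr sigma [1..<m] (sigma m Z) = foldr sigma [1..<Suc m] Z" for Z
      using m1 by simp
    let ?Z = "foldr sigma (Dl (m-1)) par"
    have gZ: "good n ?Z" using good_Dl Suc by simp
    have "foldr sigma (Dl (Suc m)) (sigma i par) = foldr sigma [1..<Suc m] (foldr sigma [1..<Suc m] ?Z)"
      unfolding DS foldr_append using c d im by simp
    also have "\<dots> = sigma 1 (foldr sigma [1..<Suc m] (foldr sigma [1..<m] ?Z))"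
      using E4[OF gZ, of "Suc m"] Suc.prems m1 by simp
    also have "\<dots> = sigma (Suc m - i) (foldr sigma (Dl (Suc m)) par)"
      unfolding DS foldr_append using im by simp
    finally show ?thesis .
  qed
qed

lemma flip_word:
  assumes g: "good n par" and w: "\<forall>a\<in>set w. 1 \<le> a \<and> a < m" and mn: "m \<le> n"
  shows "foldr sigma (Dl m) (foldr sigma w par) = foldr sigma (map (\<lambda>i. m - i) w) (foldr sigma (Dl m) par)"
  using w
proof (induction w)
  case Nil then show ?case by simp
next
  case (Cons a w)
  have gw: "good n (foldr sigma w par)" by (rule good_foldr[OF g]) (use Cons.prems mn in auto)
  have "foldr sigma (Dl m) (sigma a (foldr sigma w par)) = sigma (m - a) (foldr sigma (Dl m) (foldr sigma w par))"
    by (rule E6[OF gw]) (use Cons.prems mn in auto)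
  then show ?case using Cons by simp
qed

lemma map_rev_upt: "map (\<lambda>i. m - i) [1..<m] = rev [1..<m]"
  by (rule nth_equalityI) (auto simp: rev_nth)

lemma E7:
  assumes g: "good n par" and m1: "1 \<le> m" and mn: "m \<le> n"
  shows "foldr sigma (Dl m) (foldr sigma (Dl m) par) = (dl m ^^ m) par"
  using m1 mn g
proof (induction m arbitrary: par rule: dec_induct)
  case base then show ?case by (simp add: Dl_1 dl_def)
next
  case (step m)
  have gD: "good n (foldr sigma (Dl m) par)" using good_Dl step by simp
  have "foldr sigma (Dl (Suc m)) (foldr sigma (Dl (Suc m)) par)
      = foldr sigma (Dl (Suc m)) (foldr sigma [1..<Suc m] (foldr sigma (Dl m) par))"
    by (simp add: Dl_Suc)
  also have "\<dots> = foldr sigma (map (\<lambda>i. Suc m - i) [1..<Suc m]) (foldr sigma (Dl (Suc m)) (foldr sigma (Dl m) par))"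
    by (rule flip_word[OF gD]) (use step in auto)
  also have "\<dots> = foldr sigma (rev [1..<Suc m]) (foldr sigma [1..<Suc m] (foldr sigma (Dl m) (foldr sigma (Dl m) par)))"
    by (simp only: map_rev_upt[of "Suc m"] Dl_Suc foldr_append comp_apply)
  also have "foldr sigma (Dl m) (foldr sigma (Dl m) par) = (dl m ^^ m) par"
    using step by simp
  also have "foldr sigma (rev [1..<Suc m]) (foldr sigma [1..<Suc m] ((dl m ^^ m) par)) = foldr sigma (rev [1..<Suc m]) (dl (Suc m) ((dl m ^^ m) par))"
    by (simp only: dl_def)
  also have "\<dots> = (dl (Suc m) ^^ Suc m) par"
    using E5[OF step.prems(2), of "Suc m" "Suc m"] step by (simp del: upt_Suc)
  finally show ?case .
qed


lemma pk_shift: "1 \<le> u \<Longrightarrow> Suc u \<le> n \<Longrightarrow> pk n u = pk n (Suc u) \<circ> sw u n"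
  unfolding pk_def sw_def by (auto simp: fun_eq_iff)

lemma ipk_shift: "1 \<le> u \<Longrightarrow> Suc u \<le> n \<Longrightarrow> ipk n u = sw u n \<circ> ipk n (Suc u)"
  unfolding ipk_def sw_def by (auto simp: fun_eq_iff)

lemma step_Q:
  assumes g: "good n par" and u1: "1 \<le> u" and un: "Suc u \<le> n"
  shows "sigma u (Q n (Suc u) par) = Q n u par"
proof -
  have k1: "1 \<le> Suc u" using u1 by simp
  have pu: "pk n (Suc u) u = u" and pn: "pk n (Suc u) n = Suc u" using un unfolding pk_def by auto
  have "sigma u (Q n (Suc u) par) = sigma2 u (Suc u) (pk n (Suc u) \<circ> Mk n (Suc u) par \<circ> ipk n (Suc u))"
    using u1 by (simp add: sigma_eq Q_def)
  also have "\<dots> = sigma2 (pk n (Suc u) u) (pk n (Suc u) n) (pk n (Suc u) \<circ> Mk n (Suc u) par \<circ> ipk n (Suc u))"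
    by (simp only: pu pn)
  also have "\<dots> = pk n (Suc u) \<circ> sigma2 u n (Mk n (Suc u) par) \<circ> ipk n (Suc u)"
    by (rule sigma2_conj) (use ipk_pk[OF k1 un] pk_ipk[OF k1 un] pk_0[OF k1 un] in auto)
  also have "\<dots> = Q n u par"
  proof (rule ext)
    fix y
    show "(pk n (Suc u) \<circ> sigma2 u n (Mk n (Suc u) par) \<circ> ipk n (Suc u)) y = Q n u par y"
      unfolding Q_def pk_shift[OF u1 un] ipk_shift[OF u1 un]
      using local_step[OF g u1 un] by simp
  qed
  finally show ?thesis .
qed

lemma Q_n: assumes g: "good n par" and n1: "1 \<le> n" shows "Q n n par = par"
proof -
  have r2: "par n \<le> n" using g unfolding good_def by auto
  have pn: "par n \<noteq> n" using good_noloop[OF g, of n] n1 by simp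
  have "Mk n n par = par" unfolding Mk_def inA_def using r2 pn by (auto simp: fun_eq_iff)
  moreover have "pk n n = id" "ipk n n = id" unfolding pk_def ipk_def by (auto simp: fun_eq_iff)
  ultimately show ?thesis unfolding Q_def by simp
qed

lemma Q_1: "Q n 1 par = rot n par"
proof -
  have "Mk n 1 par = par" unfolding Mk_def inA_def by (auto simp: fun_eq_iff)
  then show ?thesis unfolding Q_def rot_def by simp
qed

lemma foldr_Q:
  assumes g: "good n par" and k1: "1 \<le> k" and kn: "k \<le> n"
  shows "foldr sigma [k..<n] par = Q n k par"
  using kn k1
proof (induction k rule: inc_induct)
  case base then show ?case using Q_n[OF g] by simp
next
  case (step k)
  have "foldr sigma [k..<n] par = sigma k (foldr sigma [Suc k..<n] par)"
    using step.hyps by (simp add: upt_conv_Cons)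
  also have "\<dots> = sigma k (Q n (Suc k) par)" using step by simp
  also have "\<dots> = Q n k par" by (rule step_Q[OF g step.prems]) (use step.hyps in simp)
  finally show ?case .
qed

lemma dl_rot: "good n par \<Longrightarrow> 1 \<le> n \<Longrightarrow> dl n par = rot n par"
  unfolding dl_def using foldr_Q[of n par 1] Q_1 by simp

lemma foldr_comp_id: "foldr (\<lambda>i f. g i \<circ> f) xs id x = foldr g xs x"
  by (induction xs) auto

lemma delta_dl: "delta m = dl m"
  unfolding delta_def dl_def by (auto simp: fun_eq_iff foldr_comp_id)

lemma Garside_Dl: "Garside n par = foldr sigma (Dl n) par"
proof -
  have "foldr (\<lambda>m f. delta m \<circ> f) ms id par = foldr sigma (concat (map (\<lambda>k. [1..<k]) ms)) par" for ms
    by (induction ms arbitrary: par) (auto simp: delta_dl dl_def)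
  then show ?thesis unfolding Garside_def Dl_def by simp
qed

lemma good_rot: "good n par \<Longrightarrow> 1 \<le> n \<Longrightarrow> good n (rot n par)"
  using good_dl[of n par n] dl_rot by simp

lemma Garside_sq:
  assumes g: "good n par" and n1: "1 \<le> n"
  shows "(Garside n ^^ 2) par = (rot n ^^ n) par"
proof -
  have "(Garside n ^^ 2) par = foldr sigma (Dl n) (foldr sigma (Dl n) par)"
    by (simp add: Garside_Dl numeral_2_eq_2)
  also have "\<dots> = (dl n ^^ n) par" by (rule E7[OF g n1]) simp
  also have "(dl n ^^ k) par = (rot n ^^ k) par" for k
  proof (induction k)
    case 0 then show ?case by simp
  next
    case (Suc k)
    have "good n ((rot n ^^ k) par)" by (induction k) (use g n1 good_rot in auto)
    then show ?case using Suc dl_rot n1 by simp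
  qed
  finally show ?thesis .
qed


lemma tree_good:
  assumes t: "is_tree n par" shows "good n par"
proof -
  have t1: "\<forall>j. j \<notin> {1..n} \<longrightarrow> par j = 0" and t2: "\<forall>j\<in>{1..n}. par j \<le> n \<and> par j \<noteq> j"
    and t4: "\<forall>j\<in>{1..n}. \<exists>m. (par ^^ m) j = 0" using t unfolding is_tree_def by auto
  have r1: "\<forall>j. (j = 0 \<or> n < j) \<longrightarrow> par j = 0" using t1 by auto
  have r2: "\<forall>j. par j \<le> n" using t1 t2 by (metis le0)
  define h where "h j = (LEAST m. (par ^^ m) j = 0)" for j
  have "\<forall>j. par j \<noteq> 0 \<longrightarrow> h (par j) < h j"
  proof (intro allI impI)
    fix j assume pj: "par j \<noteq> 0"
    then have jr: "j \<in> {1..n}" using t1 by auto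
    obtain m where m: "(par ^^ m) j = 0" using t4 jr by blast
    have hj: "(par ^^ h j) j = 0" unfolding h_def using m by (rule LeastI)
    have "h j \<noteq> 0" using hj jr by (cases "h j") auto
    then obtain t where ht: "h j = Suc t" by (cases "h j") auto
    have "(par ^^ t) (par j) = 0" using hj ht by (simp add: funpow_Suc_right del: funpow.simps)
    then have "h (par j) \<le> t" unfolding h_def by (rule Least_le)
    then show "h (par j) < h j" using ht by simp
  qed
  then show ?thesis unfolding good_def using r1 r2 by blast
qed

definition pm :: "nat \<Rightarrow> (nat \<Rightarrow> nat) \<Rightarrow> (nat \<Rightarrow> nat) \<Rightarrow> bool" where
  "pm n \<pi> \<rho> \<longleftrightarrow> (\<forall>x. \<rho> (\<pi> x) = x) \<and> (\<forall>x. \<pi> (\<rho> x) = x) \<and> \<pi> 0 = 0 \<and>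
     (\<forall>x. (x \<in> {1..n}) = (\<pi> x \<in> {1..n}))"

lemma pm_pk: "1 \<le> k \<Longrightarrow> k \<le> n \<Longrightarrow> pm n (pk n k) (ipk n k)"
  unfolding pm_def using ipk_pk pk_ipk pk_0 by (auto simp: pk_def)

lemma pm_facts:
  assumes "pm n \<pi> \<rho>"
  shows "\<And>x. \<rho> (\<pi> x) = x" "\<And>x. \<pi> (\<rho> x) = x" "\<pi> 0 = 0" "\<rho> 0 = 0"
    "\<And>x. (\<pi> x \<in> {1..n}) = (x \<in> {1..n})" "\<And>x. (\<rho> x \<in> {1..n}) = (x \<in> {1..n})"
    "\<And>a b. (\<pi> a = \<pi> b) = (a = b)" "\<And>a. (\<pi> a = 0) = (a = 0)"
proof -
  have l: "\<And>x. \<rho> (\<pi> x) = x" and r: "\<And>x. \<pi> (\<rho> x) = x" and z: "\<pi> 0 = 0"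
    and rg: "\<And>x. (x \<in> {1..n}) = (\<pi> x \<in> {1..n})" using assms unfolding pm_def by auto
  show "\<And>x. \<rho> (\<pi> x) = x" "\<And>x. \<pi> (\<rho> x) = x" "\<pi> 0 = 0" by (fact l r z)+
  show "\<rho> 0 = 0" using l[of 0] z by simp
  show "\<And>x. (\<pi> x \<in> {1..n}) = (x \<in> {1..n})" using rg by simp
  show "\<And>x. (\<rho> x \<in> {1..n}) = (x \<in> {1..n})" using rg[of "\<rho> _"] r by simp
  show e: "\<And>a b. (\<pi> a = \<pi> b) = (a = b)" by (metis l)
  show "\<And>a. (\<pi> a = 0) = (a = 0)" using e[of _ 0] z by simp
qed

lemma conj_pow: "(\<And>x. \<rho> (\<pi> x) = x) \<Longrightarrow> (\<And>x. \<pi> (\<rho> x) = x) \<Longrightarrow> ((\<pi> \<circ> f \<circ> \<rho>) ^^ m) = \<pi> \<circ> (f ^^ m) \<circ> \<rho>"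
  by (induction m) (auto simp: fun_eq_iff)

lemma is_tree_conj:
  assumes t: "is_tree n f" and p: "pm n \<pi> \<rho>"
  shows "is_tree n (\<pi> \<circ> f \<circ> \<rho>)"
proof -
  note pf = pm_facts[OF p]
  have t1: "\<forall>j. j \<notin> {1..n} \<longrightarrow> f j = 0" and t2: "\<forall>j\<in>{1..n}. f j \<le> n \<and> f j \<noteq> j"
    and t3: "card {j\<in>{1..n}. f j = 0} = 1"
    and t4: "\<forall>j\<in>{1..n}. \<exists>m. (f ^^ m) j = 0" using t unfolding is_tree_def by auto
  let ?g = "\<pi> \<circ> f \<circ> \<rho>"
  have g1: "\<forall>j. j \<notin> {1..n} \<longrightarrow> ?g j = 0"
  proof (intro allI impI)
    fix j assume "j \<notin> {1..n}"
    then have "\<rho> j \<notin> {1..n}" using pf(6)[of j] by simp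
    then show "?g j = 0" using t1 pf(3) by simp
  qed
  have g2: "\<forall>j\<in>{1..n}. ?g j \<le> n \<and> ?g j \<noteq> j"
  proof
    fix j assume j: "j \<in> {1..n}"
    then have rj: "\<rho> j \<in> {1..n}" using pf by simp
    have "?g j \<le> n"
    proof (cases "f (\<rho> j) = 0")
      case True then show ?thesis by (simp add: pf(3))
    next
      case False
      then have "f (\<rho> j) \<in> {1..n}" using t2 rj by auto
      then have "\<pi> (f (\<rho> j)) \<in> {1..n}" using pf by simp
      then show ?thesis by simp
    qed
    moreover have "?g j \<noteq> j"
    proof
      assume gj: "?g j = j"
      have "f (\<rho> j) = \<rho> (\<pi> (f (\<rho> j)))" using pf(1) by simp
      also have "\<dots> = \<rho> j" using gj by simp
      finally have "f (\<rho> j) = \<rho> j" .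
      then show False using t2 rj by auto
    qed
    ultimately show "?g j \<le> n \<and> ?g j \<noteq> j" by simp
  qed
  have "{j\<in>{1..n}. ?g j = 0} = \<pi> ` {j\<in>{1..n}. f j = 0}"
  proof
    show "{j\<in>{1..n}. ?g j = 0} \<subseteq> \<pi> ` {j\<in>{1..n}. f j = 0}"
    proof
      fix j assume "j \<in> {j\<in>{1..n}. ?g j = 0}"
      then have "\<rho> j \<in> {j\<in>{1..n}. f j = 0}" using pf by simp
      then show "j \<in> \<pi> ` {j\<in>{1..n}. f j = 0}" by (rule image_eqI[where f=\<pi> and x="\<rho> j", OF pf(2)[of j, symmetric]])
    qed
    show "\<pi> ` {j\<in>{1..n}. f j = 0} \<subseteq> {j\<in>{1..n}. ?g j = 0}" using pf by auto
  qed
  moreover have "inj_on \<pi> {j\<in>{1..n}. f j = 0}" using pf(7) by (simp add: inj_on_def)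
  ultimately have g3: "card {j\<in>{1..n}. ?g j = 0} = 1" using t3 by (simp add: card_image)
  have g4: "\<forall>j\<in>{1..n}. \<exists>m. (?g ^^ m) j = 0"
  proof
    fix j assume "j \<in> {1..n}"
    then have "\<rho> j \<in> {1..n}" using pf by simp
    then obtain m where "(f ^^ m) (\<rho> j) = 0" using t4 by blast
    then have "(?g ^^ m) j = 0" using conj_pow[where \<rho>=\<rho> and \<pi>=\<pi> and f=f and m=m] pf by simp
    then show "\<exists>m. (?g ^^ m) j = 0" by blast
  qed
  show ?thesis unfolding is_tree_def using g1 g2 g3 g4 by blast
qed

lemma rweight_conj:
  assumes p: "pm n \<pi> \<rho>"
  shows "rweight n (\<pi> \<circ> f \<circ> \<rho>) (\<pi> v) = rweight n f v"
proof -
  note pf = pm_facts[OF p]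
  let ?g = "\<pi> \<circ> f \<circ> \<rho>"
  have cp: "(?g ^^ m) = \<pi> \<circ> (f ^^ m) \<circ> \<rho>" for m by (rule conj_pow) (simp_all add: pf(1,2))
  have "{j\<in>{1..n}. \<exists>m. (?g ^^ m) j = \<pi> v} = \<pi> ` {j\<in>{1..n}. \<exists>m. (f ^^ m) j = v}"
  proof
    show "{j\<in>{1..n}. \<exists>m. (?g ^^ m) j = \<pi> v} \<subseteq> \<pi> ` {j\<in>{1..n}. \<exists>m. (f ^^ m) j = v}"
    proof
      fix j assume "j \<in> {j\<in>{1..n}. \<exists>m. (?g ^^ m) j = \<pi> v}"
      then obtain m where jr: "j \<in> {1..n}" and m: "(?g ^^ m) j = \<pi> v" by blast
      have "\<pi> ((f ^^ m) (\<rho> j)) = \<pi> v" using m cp[of m] by simp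
      then have "(f ^^ m) (\<rho> j) = v" using pf(7)[of "(f ^^ m) (\<rho> j)" v] by simp
      moreover have "\<rho> j \<in> {1..n}" using jr pf(6)[of j] by simp
      ultimately have "\<rho> j \<in> {j\<in>{1..n}. \<exists>m. (f ^^ m) j = v}" by blast
      then show "j \<in> \<pi> ` {j\<in>{1..n}. \<exists>m. (f ^^ m) j = v}" by (rule image_eqI[where f=\<pi> and x="\<rho> j", OF pf(2)[of j, symmetric]])
    qed
    show "\<pi> ` {j\<in>{1..n}. \<exists>m. (f ^^ m) j = v} \<subseteq> {j\<in>{1..n}. \<exists>m. (?g ^^ m) j = \<pi> v}"
    proof
      fix x assume "x \<in> \<pi> ` {j\<in>{1..n}. \<exists>m. (f ^^ m) j = v}"
      then obtain i m where x: "x = \<pi> i" "i \<in> {1..n}" "(f ^^ m) i = v" by blast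
      have "(?g ^^ m) x = \<pi> v" using x cp pf(1) by simp
      moreover have "x \<in> {1..n}" using x pf(5)[of i] by simp
      ultimately show "x \<in> {j\<in>{1..n}. \<exists>m. (?g ^^ m) j = \<pi> v}" by blast
    qed
  qed
  moreover have "inj_on \<pi> {j\<in>{1..n}. \<exists>m. (f ^^ m) j = v}" using pf(7) by (simp add: inj_on_def)
  ultimately have c: "card {j\<in>{1..n}. \<exists>m. (?g ^^ m) j = \<pi> v} = card {j\<in>{1..n}. \<exists>m. (f ^^ m) j = v}"
    by (simp add: card_image)
  have g1: "?g (\<pi> v) = \<pi> (f v)" by (simp add: pf(1))
  have g2: "?g (\<pi> (f v)) = \<pi> (f (f v))" by (simp add: pf(1))
  show ?thesis unfolding rweight_def g1 g2 c by (simp only: pf(8))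
qed


lemma fs: "(f ^^ Suc t) x = f ((f ^^ t) x)" by simp

lemma pow_root: fixes par :: "nat \<Rightarrow> nat" shows "par n = 0 \<Longrightarrow> par 0 = (0::nat) \<Longrightarrow> (par ^^ Suc t) n = 0"
proof (induction t)
  case 0 then show ?case using fs[of 0 par n] by simp
next
  case (Suc t) then show ?case using fs[of "Suc t" par n] by simp
qed

lemma pow_le: fixes par :: "nat \<Rightarrow> nat" assumes "\<forall>j. par j \<le> n" "x \<le> n" shows "(par ^^ t) x \<le> n"
  using assms by (induction t) auto

lemma weight_sum:
  assumes t: "is_tree n par" and r: "par n = 0" and n1: "1 \<le> n"
  shows "(\<Sum>i\<in>{1..<n}. rweight n par i) = n - 1"
proof -
  have t1: "\<forall>j. j \<notin> {1..n} \<longrightarrow> par j = 0" and t2: "\<forall>j\<in>{1..n}. par j \<le> n \<and> par j \<noteq> j"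
    and t3: "card {j\<in>{1..n}. par j = 0} = 1"
    and t4: "\<forall>j\<in>{1..n}. \<exists>m. (par ^^ m) j = 0" using t unfolding is_tree_def by auto
  have p0: "par 0 = 0" using t1 by simp
  have ple: "\<forall>j. par j \<le> n"
  proof
    fix j show "par j \<le> n" using t1[rule_format, of j] t2 by (cases "j \<in> {1..n}") auto
  qed
  have nin: "n \<in> {j\<in>{1..n}. par j = 0}" using r n1 by simp
  obtain x where x: "{j\<in>{1..n}. par j = 0} = {x}" using t3 by (rule card_1_singletonE)
  have roots: "{j\<in>{1..n}. par j = 0} = {n}" using x nin by simp
  have nz: "par i \<noteq> 0" if "i \<in> {1..<n}" for i
  proof
    assume "par i = 0"
    then have "i \<in> {j\<in>{1..n}. par j = 0}" using that by simp
    then have "i \<in> {n}" unfolding roots .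
    then show False using that by simp
  qed
  have pr: "par i \<in> {1..n}" if "i \<in> {1..<n}" for i
    using nz[OF that] t2 that by fastforce
  define desc where "desc i = {j\<in>{1..n}. \<exists>m. (par ^^ m) j = i}" for i
  define C where "C = {i\<in>{1..<n}. par i = n}"
  have rw: "rweight n par i = (if par i = n then card (desc i) else 0)" if "i \<in> {1..<n}" for i
  proof -
    have "(par (par i) = 0) = (par (par i) = 0 \<and> par i \<in> {1..n})" using pr[OF that] by simp
    also have "\<dots> = (par i \<in> {j\<in>{1..n}. par j = 0})" by auto
    also have "\<dots> = (par i = n)" using roots by simp
    finally have "(par (par i) = 0) = (par i = n)" .
    then show ?thesis unfolding rweight_def desc_def using nz[OF that] by simp
  qed
  have "(\<Sum>i\<in>{1..<n}. rweight n par i) = (\<Sum>i\<in>{1..<n}. if par i = n then card (desc i) else 0)"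
    by (rule sum.cong) (use rw in auto)
  also have "\<dots> = (\<Sum>i\<in>C. card (desc i))"
    unfolding C_def by (rule sum.inter_filter[symmetric]) simp
  also have "\<dots> = card (\<Union>i\<in>C. desc i)"
  proof (rule card_UN_disjoint[symmetric])
    show "finite C" unfolding C_def by simp
    show "\<forall>i\<in>C. finite (desc i)" unfolding desc_def by simp
    show "\<forall>i\<in>C. \<forall>j\<in>C. i \<noteq> j \<longrightarrow> desc i \<inter> desc j = {}"
    proof (intro ballI impI)
      fix i i' assume i: "i \<in> C" and i': "i' \<in> C" and ne: "i \<noteq> i'"
      have key: "False" if "(par ^^ a) x = i" "(par ^^ b) x = i'" "a \<le> b" "i \<in> C" "i' \<in> C" "i \<noteq> i'" for a b x i i'
      proof -
        have e1: "(par ^^ (b - a)) i = i'" using that funpow_add[of "b - a" a par] by (simp add: comp_def)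
        have "b - a \<noteq> 0" using that e1 by auto
        then obtain d where d: "b - a = Suc d" by (cases "b - a") auto
        have pi: "par i = n" using that(4) C_def by simp
        have e2: "(par ^^ Suc d) i = (par ^^ d) n" using pi by (simp add: funpow_Suc_right del: funpow.simps)
        have e3: "(par ^^ d) n \<in> {0, n}" using pow_root[OF r p0] by (cases d) auto
        have "i' \<in> {0, n}" using e1 e2 e3 d by simp
        then show False using that(5) C_def by auto
      qed
      show "desc i \<inter> desc i' = {}"
      proof (rule ccontr)
        assume "desc i \<inter> desc i' \<noteq> {}"
        then obtain x a b where "(par ^^ a) x = i" "(par ^^ b) x = i'" unfolding desc_def by blast
        then show False using key[of a x i b i'] key[of b x i' a i] i i' ne by (cases "a \<le> b") auto
      qed
    qed
  qed
  also have "(\<Union>i\<in>C. desc i) = {1..<n}"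
  proof
    show "(\<Union>i\<in>C. desc i) \<subseteq> {1..<n}"
    proof
      fix j assume "j \<in> (\<Union>i\<in>C. desc i)"
      then obtain i m where i: "i \<in> C" and j: "j \<in> {1..n}" and m: "(par ^^ m) j = i" unfolding desc_def by blast
      have "j \<noteq> n"
      proof
        assume "j = n"
        then have "(par ^^ m) n \<in> {0, n}" using pow_root[OF r p0] by (cases m) auto
        then show False using m i C_def \<open>j = n\<close> by auto
      qed
      then show "j \<in> {1..<n}" using j by simp
    qed
    show "{1..<n} \<subseteq> (\<Union>i\<in>C. desc i)"
    proof
      fix j assume j: "j \<in> {1..<n}"
      have gen: "\<forall>j\<in>{1..<n}. (par ^^ m) j = 0 \<longrightarrow> (\<exists>i\<in>C. \<exists>m'. (par ^^ m') j = i)" for m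
      proof (induction m)
        case 0 then show ?case by auto
      next
        case (Suc m)
        show ?case
        proof (intro ballI impI)
          fix j assume j: "j \<in> {1..<n}" and z: "(par ^^ Suc m) j = 0"
          show "\<exists>i\<in>C. \<exists>m'. (par ^^ m') j = i"
          proof (cases "par j = n")
            case True
            then have "j \<in> C" using j C_def by simp
            then show ?thesis by (metis funpow_0)
          next
            case False
            then have pj: "par j \<in> {1..<n}" using pr[OF j] by auto
            have "(par ^^ m) (par j) = 0" using z by (simp add: funpow_Suc_right del: funpow.simps)
            then obtain i m' where "i \<in> C" "(par ^^ m') (par j) = i" using Suc pj by blast
            then have "(par ^^ Suc m') j = i" by (simp add: funpow_Suc_right del: funpow.simps)
            then show ?thesis using \<open>i \<in> C\<close> by blast
          qed
        qed
      qed
      have "j \<in> {1..n}" using j by simp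
      then obtain m where "(par ^^ m) j = 0" using t4 by blast
      then obtain i m' where "i \<in> C" "(par ^^ m') j = i" using gen j by blast
      then show "j \<in> (\<Union>i\<in>C. desc i)" unfolding desc_def using j by auto
    qed
  qed
  finally show ?thesis by simp
qed


lemma asigma_eq: "asigma n i (par, e) = (sigma i par, if par (Suc i) = 0 then (e + int (rweight n par i)) mod int n else e)"
  unfolding asigma_def by simp

lemma adelta_eq: "adelta n m x = foldr (asigma n) [1..<m] x"
  unfolding adelta_def by (simp add: foldr_comp_id)

lemma Q_at: assumes "1 \<le> k" "k \<le> n" shows "Q n k par k = pk n k (par n)"
proof -
  have "ipk n k k = n" unfolding ipk_def by simp
  then show ?thesis unfolding Q_def using Mk_n by simp
qed

lemma foldr_asigma_Q:
  assumes g: "good n par" and k1: "1 \<le> k" and kn: "k \<le> n" and e0: "0 \<le> e" and en: "e < int n"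
  shows "foldr (asigma n) [k..<n] (par, e) = (Q n k par,
     if par n = 0 then (e + (\<Sum>i\<in>{k..<n}. int (rweight n (Q n (Suc i) par) i))) mod int n else e)"
  using kn k1
proof (induction k rule: inc_induct)
  case base then show ?case using Q_n[OF g] e0 en by simp
next
  case (step k)
  let ?S = "\<Sum>i\<in>{Suc k..<n}. int (rweight n (Q n (Suc i) par) i)"
  let ?E = "if par n = 0 then (e + ?S) mod int n else e"
  have IH: "foldr (asigma n) [Suc k..<n] (par, e) = (Q n (Suc k) par, ?E)" using step by simp
  have z: "(Q n (Suc k) par (Suc k) = 0) = (par n = 0)"
    using Q_at[of "Suc k" n par] step.hyps pm_facts(8)[OF pm_pk[of "Suc k" n]] by simp
  have sig: "sigma k (Q n (Suc k) par) = Q n k par" by (rule step_Q[OF g step.prems]) (use step.hyps in simp)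
  have "foldr (asigma n) [k..<n] (par, e) = asigma n k (foldr (asigma n) [Suc k..<n] (par, e))"
    using step.hyps by (simp add: upt_conv_Cons)
  also have "\<dots> = asigma n k (Q n (Suc k) par, ?E)" using IH by simp
  also have "\<dots> = (Q n k par, if par n = 0 then (?E + int (rweight n (Q n (Suc k) par) k)) mod int n else ?E)"
    unfolding asigma_eq sig z by simp
  also have "\<dots> = (Q n k par, if par n = 0 then (e + (\<Sum>i\<in>{k..<n}. int (rweight n (Q n (Suc i) par) i))) mod int n else e)"
  proof (cases "par n = 0")
    case True
    have "(\<Sum>i\<in>{k..<n}. int (rweight n (Q n (Suc i) par) i)) = int (rweight n (Q n (Suc k) par) k) + ?S"
      using step.hyps by (simp add: sum.atLeast_Suc_lessThan)
    moreover have "(int (rweight n (Q n (Suc k) par) k) + (e + ?S) mod int n) mod int n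
       = (e + (int (rweight n (Q n (Suc k) par) k) + ?S)) mod int n"
      by (simp add: mod_add_right_eq add.left_commute)
    ultimately show ?thesis using True by (simp add: add.commute)
  next
    case False then show ?thesis by simp
  qed
  finally show ?case .
qed

lemma adelta_step:
  assumes t: "is_tree n par" and n2: "2 \<le> n" and e0: "0 \<le> e" and en: "e < int n"
  shows "adelta n n (par, e) = (rot n par, if par n = 0 then (e - 1) mod int n else e)"
proof -
  have g: "good n par" by (rule tree_good[OF t])
  have A: "adelta n n (par, e) = (rot n par, if par n = 0 then (e + (\<Sum>i\<in>{1..<n}. int (rweight n (Q n (Suc i) par) i))) mod int n else e)"
    unfolding adelta_eq using foldr_asigma_Q[OF g _ _ e0 en, of 1] n2 Q_1 by simp
  show ?thesis
  proof (cases "par n = 0")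
    case False then show ?thesis using A by simp
  next
    case True
    have Mp: "Mk n k par = par" for k unfolding Mk_def using True by (simp add: fun_eq_iff)
    have rw: "rweight n (Q n (Suc i) par) i = rweight n par i" if "i \<in> {1..<n}" for i
    proof -
      have pi: "pk n (Suc i) i = i" using that unfolding pk_def by auto
      have pm: "pm n (pk n (Suc i)) (ipk n (Suc i))" by (rule pm_pk) (use that in auto)
      have "rweight n (Q n (Suc i) par) i = rweight n (pk n (Suc i) \<circ> par \<circ> ipk n (Suc i)) (pk n (Suc i) i)"
        unfolding Q_def Mp pi ..
      also have "\<dots> = rweight n par i" by (rule rweight_conj[OF pm])
      finally show ?thesis .
    qed
    have "(\<Sum>i\<in>{1..<n}. int (rweight n (Q n (Suc i) par) i)) = (\<Sum>i\<in>{1..<n}. int (rweight n par i))"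
      by (rule sum.cong) (use rw in auto)
    also have "\<dots> = int (\<Sum>i\<in>{1..<n}. rweight n par i)" by simp
    also have "\<dots> = int n - 1" using weight_sum[OF t True] n2 by simp
    finally have S: "(\<Sum>i\<in>{1..<n}. int (rweight n (Q n (Suc i) par) i)) = int n - 1" .
    have "(e + (int n - 1)) mod int n = (e - 1 + int n) mod int n" by (simp add: algebra_simps)
    also have "\<dots> = (e - 1) mod int n" by simp
    finally show ?thesis using A S True by simp
  qed
qed


lemma pkS: "(pk n 1 ^^ Suc k) y = pk n 1 ((pk n 1 ^^ k) y)" by simp
lemma ipkS: "(ipk n 1 ^^ Suc k) y = (ipk n 1 ^^ k) (ipk n 1 y)" by (simp add: funpow_swap1)

lemma rot_pow: "(rot n ^^ k) par = (pk n 1 ^^ k) \<circ> par \<circ> (ipk n 1 ^^ k)"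
proof (induction k)
  case 0 then show ?case by simp
next
  case (Suc k)
  have "(rot n ^^ Suc k) par = rot n ((rot n ^^ k) par)" by simp
  also have "\<dots> = pk n 1 \<circ> ((pk n 1 ^^ k) \<circ> par \<circ> (ipk n 1 ^^ k)) \<circ> ipk n 1" unfolding rot_def Suc.IH ..
  also have "\<dots> = (pk n 1 ^^ Suc k) \<circ> par \<circ> (ipk n 1 ^^ Suc k)"
    by (simp only: fun_eq_iff comp_apply pkS ipkS) simp
  finally show ?case .
qed

lemma c_pow_in: assumes "x \<in> {1..n}" shows "(pk n 1 ^^ k) x = (x - 1 + k) mod n + 1"
proof (induction k)
  case 0
  have "(x - 1) mod n = x - 1" using assms by (intro mod_less) auto
  then show ?case using assms by simp
next
  case (Suc k)
  let ?y = "(x - 1 + k) mod n + 1"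
  have n0: "0 < n" using assms by auto
  have "(x - 1 + k) mod n < n" using n0 by simp
  then have "pk n 1 ?y = Suc (x - 1 + k) mod n + 1"
    unfolding pk_def mod_Suc[of "x - 1 + k" n] by auto
  then show ?case using Suc by simp
qed

lemma c_pow_out: assumes "x \<notin> {1..n}" "1 \<le> n" shows "(pk n 1 ^^ k) x = x"
proof (induction k)
  case 0 then show ?case by simp
next
  case (Suc k)
  then show ?case using assms unfolding pk_def by auto
qed

lemma c_pow_n: "1 \<le> n \<Longrightarrow> (pk n 1 ^^ n) x = x"
proof (cases "x \<in> {1..n}")
  case True
  have a: "(pk n 1 ^^ n) x = (x - 1 + n) mod n + 1" by (rule c_pow_in[OF True])
  have "(x - 1 + n) mod n = (x - 1) mod n" by (simp only: mod_add_self2)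
  also have "\<dots> = x - 1" using True by (intro mod_less) auto
  finally have "(x - 1 + n) mod n = x - 1" .
  then show ?thesis using a True by (simp only:) simp
next
  case False
  assume "1 \<le> n"
  then show ?thesis using c_pow_out[OF False] by simp
qed

lemma ic_c_pow: "1 \<le> n \<Longrightarrow> (ipk n 1 ^^ k) ((pk n 1 ^^ k) x) = x"
proof (induction k arbitrary: x)
  case 0 then show ?case by simp
next
  case (Suc k)
  have "(ipk n 1 ^^ Suc k) ((pk n 1 ^^ Suc k) x) = (ipk n 1 ^^ k) (ipk n 1 (pk n 1 ((pk n 1 ^^ k) x)))"
    by (simp only: pkS ipkS)
  also have "\<dots> = (ipk n 1 ^^ k) ((pk n 1 ^^ k) x)" using ipk_pk[of 1 n] Suc.prems by simp
  finally show ?case using Suc by simp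
qed

lemma c_ic_pow: "1 \<le> n \<Longrightarrow> (pk n 1 ^^ k) ((ipk n 1 ^^ k) x) = x"
proof (induction k arbitrary: x)
  case 0 then show ?case by simp
next
  case (Suc k)
  have "(pk n 1 ^^ Suc k) ((ipk n 1 ^^ Suc k) x) = pk n 1 ((pk n 1 ^^ k) ((ipk n 1 ^^ k) (ipk n 1 x)))"
    by (simp only: pkS ipkS)
  also have "\<dots> = pk n 1 (ipk n 1 x)" using Suc by simp
  also have "\<dots> = x" using pk_ipk[of 1 n] Suc.prems by simp
  finally show ?case .
qed

lemma rot_pow_n: "1 \<le> n \<Longrightarrow> (rot n ^^ n) par = par"
proof -
  assume n1: "1 \<le> n"
  have "(ipk n 1 ^^ n) x = x" for x using ic_c_pow[OF n1, of n x] c_pow_n[OF n1, of x] by simp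
  then show ?thesis unfolding rot_pow using c_pow_n[OF n1] by (simp add: fun_eq_iff)
qed

lemma tree_rot: "is_tree n par \<Longrightarrow> 1 \<le> n \<Longrightarrow> is_tree n (rot n par)"
  unfolding rot_def by (rule is_tree_conj) (auto intro: pm_pk)

lemma tree_rot_pow: "is_tree n par \<Longrightarrow> 1 \<le> n \<Longrightarrow> is_tree n ((rot n ^^ k) par)"
  by (induction k) (auto intro: tree_rot)

lemma root_rot_pow:
  assumes t: "is_tree n par" and r: "par r = 0" "r \<in> {1..n}" and kn: "k < n"
  shows "((rot n ^^ k) par n = 0) = (k = n - r)"
proof -
  have n1: "1 \<le> n" using r by auto
  have t1: "\<forall>j. j \<notin> {1..n} \<longrightarrow> par j = 0" and t3: "card {j\<in>{1..n}. par j = 0} = 1"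
    using t unfolding is_tree_def by auto
  obtain x where x: "{j\<in>{1..n}. par j = 0} = {x}" using t3 by (rule card_1_singletonE)
  have roots: "{j\<in>{1..n}. par j = 0} = {r}" using x r by auto
  have icn: "(ipk n 1 ^^ k) n \<in> {1..n}"
  proof -
    have "(ipk n 1 ^^ k) n \<notin> {1..n} \<Longrightarrow> False"
    proof -
      assume a: "(ipk n 1 ^^ k) n \<notin> {1..n}"
      have "(pk n 1 ^^ k) ((ipk n 1 ^^ k) n) = (ipk n 1 ^^ k) n" by (rule c_pow_out[OF a n1])
      then have "n = (ipk n 1 ^^ k) n" using c_ic_pow[OF n1] by simp
      then show False using a n1 by simp
    qed
    then show ?thesis by blast
  qed
  have cz: "((pk n 1 ^^ k) y = 0) = (y = 0)" for y
  proof (cases "y \<in> {1..n}")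
    case True
    then show ?thesis using c_pow_in[OF True, of k] by simp
  next
    case False then show ?thesis using c_pow_out[OF False n1] by simp
  qed
  have "((rot n ^^ k) par n = 0) = (par ((ipk n 1 ^^ k) n) = 0)" unfolding rot_pow using cz by simp
  also have "\<dots> = ((ipk n 1 ^^ k) n = r)"
  proof
    assume "par ((ipk n 1 ^^ k) n) = 0"
    then have "(ipk n 1 ^^ k) n \<in> {j\<in>{1..n}. par j = 0}" using icn by simp
    then show "(ipk n 1 ^^ k) n = r" unfolding roots by simp
  next
    assume "(ipk n 1 ^^ k) n = r" then show "par ((ipk n 1 ^^ k) n) = 0" using r by simp
  qed
  also have "\<dots> = ((pk n 1 ^^ k) r = n)"
    using c_ic_pow[OF n1, of k n] ic_c_pow[OF n1, of k r] by metis
  also have "\<dots> = ((r - 1 + k) mod n + 1 = n)" using c_pow_in[OF r(2)] by simp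
  also have "\<dots> = (k = n - r)"
  proof (cases "r - 1 + k < n")
    case True then show ?thesis using r(2) by auto
  next
    case False
    have "(r - 1 + k) mod n = (r - 1 + k - n) mod n" using False by (simp add: le_mod_geq)
    also have "\<dots> = r - 1 + k - n" using r(2) kn by (intro mod_less) auto
    finally have "(r - 1 + k) mod n = r - 1 + k - n" .
    then show ?thesis using False r(2) kn by auto
  qed
  finally show ?thesis .
qed

lemma adelta_iter:
  assumes t: "is_tree n par" and n2: "2 \<le> n" and r: "par r = 0" "r \<in> {1..n}"
    and e0: "0 \<le> e" and en: "e < int n" and kn: "k \<le> n"
  shows "(adelta n n ^^ k) (par, e) = ((rot n ^^ k) par, if n - r < k then (e - 1) mod int n else e)"
  using kn
proof (induction k)
  case 0 then show ?case by simp
next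
  case (Suc k)
  let ?E = "if n - r < k then (e - 1) mod int n else e"
  have n1: "1 \<le> n" using n2 by simp
  have IH: "(adelta n n ^^ k) (par, e) = ((rot n ^^ k) par, ?E)" using Suc by simp
  have E0: "0 \<le> ?E" "?E < int n" using e0 en n1 by auto
  have tk: "is_tree n ((rot n ^^ k) par)" by (rule tree_rot_pow[OF t n1])
  have "(adelta n n ^^ Suc k) (par, e) = adelta n n ((rot n ^^ k) par, ?E)" using IH by simp
  also have "\<dots> = ((rot n ^^ Suc k) par, if (rot n ^^ k) par n = 0 then (?E - 1) mod int n else ?E)"
    using adelta_step[OF tk n2 E0] by simp
  also have "(rot n ^^ k) par n = 0 \<longleftrightarrow> k = n - r" using root_rot_pow[OF t r] Suc.prems by simp
  finally show ?case by auto
qed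

lemma partA:
  assumes t: "is_tree n par" and n2: "2 \<le> n" and e0: "0 \<le> e" and en: "e < int n"
  shows "(adelta n n ^^ n) (par, e) = (par, (e - 1) mod int n)"
proof -
  have t3: "card {j\<in>{1..n}. par j = 0} = 1" using t unfolding is_tree_def by auto
  obtain r where x: "{j\<in>{1..n}. par j = 0} = {r}" using t3 by (rule card_1_singletonE)
  then have r: "par r = 0" "r \<in> {1..n}" by auto
  show ?thesis using adelta_iter[OF t n2 r e0 en, of n] rot_pow_n[of n par] n2 r by auto
qed

lemma partB:
  assumes t: "is_tree n par" and n1: "1 \<le> n"
  shows "(Garside n ^^ 2) par = par"
  using Garside_sq[OF tree_good[OF t] n1] rot_pow_n[OF n1] by simp

lemma aGarside_Dl: "aGarside n x = foldr (asigma n) (Dl n) x"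
proof -
  have "foldr (\<lambda>m f. adelta n m \<circ> f) ms id x = foldr (asigma n) (concat (map (\<lambda>k. [1..<k]) ms)) x" for ms
    by (induction ms arbitrary: x) (auto simp: adelta_eq)
  then show ?thesis unfolding aGarside_def Dl_def by simp
qed

lemma shift_word:
  assumes n0: "0 < n"
  shows "\<exists>G. \<forall>e. 0 \<le> e \<and> e < int n \<longrightarrow> foldr (asigma n) w (par, e) = (foldr sigma w par, (e + G) mod int n)"
proof (induction w)
  case Nil
  show ?case by (rule exI[of _ 0]) simp
next
  case (Cons a w)
  then obtain G where G: "\<forall>e. 0 \<le> e \<and> e < int n \<longrightarrow> foldr (asigma n) w (par, e) = (foldr sigma w par, (e + G) mod int n)"
    by blast
  let ?P = "foldr sigma w par"
  define c where "c = (if ?P (Suc a) = 0 then int (rweight n ?P a) else 0)"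
  show ?case
  proof (rule exI[of _ "G + c"], intro allI impI)
    fix e :: int assume e: "0 \<le> e \<and> e < int n"
    have "foldr (asigma n) (a # w) (par, e) = asigma n a (?P, (e + G) mod int n)" using G e by simp
    also have "\<dots> = (sigma a ?P, ((e + G) mod int n + c) mod int n)"
      unfolding asigma_eq c_def by simp
    also have "((e + G) mod int n + c) mod int n = (e + (G + c)) mod int n"
      by (simp add: mod_add_left_eq add.assoc)
    finally show "foldr (asigma n) (a # w) (par, e) = (foldr sigma (a # w) par, (e + (G + c)) mod int n)" by simp
  qed
qed

lemma partC:
  assumes t: "is_tree n par" and n1: "1 \<le> n" and e0: "0 \<le> e" and en: "e < int n"
  shows "(aGarside n ^^ (2 * n)) (par, e) = (par, e)"
proof -
  have n0: "0 < n" using n1 by simp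
  obtain G where G: "\<forall>e. 0 \<le> e \<and> e < int n \<longrightarrow> foldr (asigma n) (Dl n @ Dl n) (par, e) = (foldr sigma (Dl n @ Dl n) par, (e + G) mod int n)"
    using shift_word[OF n0] by blast
  have fs: "foldr sigma (Dl n @ Dl n) par = par"
    using partB[OF t n1] by (simp add: Garside_Dl numeral_2_eq_2)
  have sq: "(aGarside n ^^ 2) (par, e') = (par, (e' + G) mod int n)" if "0 \<le> e'" "e' < int n" for e'
    using G that fs by (simp add: aGarside_Dl numeral_2_eq_2)
  have "(aGarside n ^^ (2 * k)) (par, e) = (par, (e + int k * G) mod int n)" for k
  proof (induction k)
    case 0 then show ?case using e0 en by simp
  next
    case (Suc k)
    have tw: "2 * Suc k = 2 + 2 * k" by simp
    have "(aGarside n ^^ (2 * Suc k)) (par, e) = (aGarside n ^^ 2) ((aGarside n ^^ (2 * k)) (par, e))"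
      by (simp only: tw funpow_add comp_apply)
    also have "\<dots> = (par, ((e + int k * G) mod int n + G) mod int n)"
      using Suc sq[of "(e + int k * G) mod int n"] n0 by simp
    also have "((e + int k * G) mod int n + G) mod int n = (e + int (Suc k) * G) mod int n"
      by (simp add: mod_add_left_eq mod_add_right_eq algebra_simps)
    finally show ?case .
  qed
  from this[of n] show ?thesis using e0 en by simp
qed


theorem theorem1p9:
  fixes n :: nat
  assumes "n \<ge> 2"
  shows "(\<forall>par e. is_tree n par \<and> e \<in> {0..<int n} \<longrightarrow>
            (adelta n n ^^ n) (par, e) = (par, (e - 1) mod int n))
       \<and> (\<forall>par. is_tree n par \<longrightarrow> (Garside n ^^ 2) par = par)
       \<and> (\<forall>par e. is_tree n par \<and> e \<in> {0..<int n} \<longrightarrow>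
            (aGarside n ^^ (2 * n)) (par, e) = (par, e))"
proof (intro conjI allI impI)
  fix par e assume h: "is_tree n par \<and> e \<in> {0..<int n}"
  then show "(adelta n n ^^ n) (par, e) = (par, (e - 1) mod int n)"
    using partA[of n par e] assms by auto
next
  fix par assume h: "is_tree n par"
  then show "(Garside n ^^ 2) par = par" using partB[of n par] assms by auto
next
  fix par e assume h: "is_tree n par \<and> e \<in> {0..<int n}"
  then show "(aGarside n ^^ (2 * n)) (par, e) = (par, e)"
    using partC[of n par e] assms by auto
qed

end
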